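(* Let $\mathbf A=(A_n)\in\mathcal S_{\mathcal Y}({\sf BDO}(\Gamma))$ and let $h:\mathbb N\to\Gamma$ tend to infinity such that the limit operator $(\mathrm{Op}(\mathbf A)+P_{\Gamma'})_h$ exists. Suppose there is an integer $r\ge0$ such that for infinitely many $n$ there exists $k$ with $h(n)\in v_k(\partial_\Omega Y_k)^{-1}\Omega_r$. Then there exist a subsequence $g=(h(n_j))_{j\ge1}$ of $h$, a strictly increasing sequence $(k_j)_{j\ge1}$ of positive integers, elements $\eta_j\in(\partial_\Omega Y_{k_j})^{-1}$ and an element $w_*\in\Gamma$ such that $h(n_j)=v_{k_j}\eta_jw_*$ for all $j$, the limit operator $(P_{\Gamma'})_g$ exists, the strong limit $\mathrm{s\text{-}lim}_{j\to\infty}R_{w_*}^{-1}R_{\eta_j}^{-1}A_{k_j}P_{Y_{k_j}}R_{\eta_j}R_{w_*}$ exists, and \[(\mathrm{Op}(\mathbf A)+P_{\Gamma'})_h=\mathrm{s\text{-}lim}_{j\to\infty}R_{w_*}^{-1}R_{\eta_j}^{-1}A_{k_j}P_{Y_{k_j}}R_{\eta_j}R_{w_*}+(P_{\Gamma'})_g.\]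
   Context: $\Gamma$ is a countable discrete group with identity $e$. For $X\subseteq\Gamma$, $P_X$ is the orthogonal projection of $l^2(\Gamma)$ onto $l^2(X)$. For $r\in\Gamma$, $(L_ru)(t)=u(r^{-1}t)$ and $(R_ru)(t)=u(tr)$; $R_r^{-1}=R_{r^{-1}}$. ${\sf BDO}(\Gamma)$ is the smallest closed subalgebra of $L(l^2(\Gamma))$ containing all $L_r$ and all multiplication operators $aI$, $a\in l^\infty(\Gamma)$. $\Omega\subseteq\Gamma$ is finite, contains $e$, generates $\Gamma$ as a semigroup; $\Omega_0=\{e\}$, $\Omega_n$ = set of products of at most $n$ elements of $\Omega$. For $A\subseteq\Gamma$: $\mathrm{int}_\Omega A=\{a\in A:\Omega a\subseteq A\}$, $\partial_\Omega A=A\setminus\mathrm{int}_\Omega A$; products and inverses of sets are taken elementwise. $\mathcal Y=(Y_n)$ is an increasing sequence of finite subsets of $\Gamma$ with union $\Gamma$. $\mathcal F_{\mathcal Y}$ is the $C^*$-algebra of bounded sequences $(A_n)$ of operators on $\mathrm{im}\,P_{Y_n}$; $\mathcal S_{\mathcal Y}({\sf BDO}(\Gamma))$ is its smallest closed $C^*$-subalgebra containing all $(P_{Y_n}AP_{Y_n})$, $A\in{\sf BDO}(\Gamma)$. Fix a sequence $(v_n)$ in $\Gamma$ which is inflating for $Z_n:=(Y_n\cup\Omega_n)(Y_n\cup\Omega_n)^{-1}(Y_n\cup\Omega_n)$, i.e. $Z_mv_m^{-1}\cap Z_nv_n^{-1}=\emptyset$ for $m\neq n$. Put $\mathrm{Op}(\mathbf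 A):=\sum_nR_{v_n}A_nP_{Y_n}R_{v_n}^{-1}$ (strongly convergent) and $\Gamma':=\Gamma\setminus\bigcup_nY_nv_n^{-1}$. A sequence $h:\mathbb N\to\Gamma$ tends to infinity if for each finite $\Gamma_0\subseteq\Gamma$, $h(n)\notin\Gamma_0$ for all large $n$. For $B\in L(l^2(\Gamma))$, $B_h$ is the limit operator of $B$ with respect to $h$ if $R_{h(m)}^{-1}BR_{h(m)}\to B_h$ and $R_{h(m)}^{-1}B^*R_{h(m)}\to B_h^*$ strongly as $m\to\infty$. *)

theory Defs
  imports "HOL-Analysis.Analysis"
begin

text \<open>The group Gamma is a type of class group_add (written additively:
  product = +, inverse = uminus, identity = 0; commutativity is NOT assumed)
  and countable. Vectors of l2(Gamma) are functions Gamma => complex; an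
  operator is a map (Gamma => complex) => (Gamma => complex), only its
  behaviour on l2 matters.\<close>

type_synonym 'g vec = "'g \<Rightarrow> complex"
type_synonym 'g op = "'g vec \<Rightarrow> 'g vec"

definition L2 :: "'g vec set" where
  "L2 = {u. (\<lambda>t. (cmod (u t))\<^sup>2) summable_on UNIV}"

definition l2norm :: "'g vec \<Rightarrow> real" where
  "l2norm u = sqrt (infsum (\<lambda>t. (cmod (u t))\<^sup>2) UNIV)"

definition l2inner :: "'g vec \<Rightarrow> 'g vec \<Rightarrow> complex" where
  "l2inner u v = infsum (\<lambda>t. u t * cnj (v t)) UNIV"

definition bounded_op :: "'g op \<Rightarrow> bool" where
  "bounded_op B \<longleftrightarrow>
     (\<forall>u\<in>L2. B u \<in> L2) \<and>
     (\<forall>u\<in>L2. \<forall>v\<in>L2. \<forall>c::complex. B (\<lambda>t. u t + c * v t) = (\<lambda>t. B u t + c * B v t)) \<and>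
     (\<exists>K. \<forall>u\<in>L2. l2norm (B u) \<le> K * l2norm u)"

definition opnorm :: "'g op \<Rightarrow> real" where
  "opnorm B = Sup {l2norm (B u) | u. u \<in> L2 \<and> l2norm u \<le> 1}"

text \<open>Hilbert space adjoint (unique on l2 for bounded operators).\<close>
definition adj :: "'g op \<Rightarrow> 'g op" where
  "adj B = (SOME C. (\<forall>v\<in>L2. C v \<in> L2) \<and>
                    (\<forall>u\<in>L2. \<forall>v\<in>L2. l2inner (B u) v = l2inner u (C v)))"

definition strong_lim :: "(nat \<Rightarrow> 'g op) \<Rightarrow> 'g op \<Rightarrow> bool" where
  "strong_lim Bs B \<longleftrightarrow> (\<forall>u\<in>L2. (\<lambda>m. l2norm (\<lambda>t. Bs m u t - B u t)) \<longlonglongrightarrow> 0)"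

definition proj :: "'g set \<Rightarrow> 'g op" where
  "proj X u = (\<lambda>t. if t \<in> X then u t else 0)"

definition Lsh :: "'g::group_add \<Rightarrow> 'g op" where
  "Lsh r u = (\<lambda>t. u (- r + t))"

definition Rsh :: "'g::group_add \<Rightarrow> 'g op" where
  "Rsh r u = (\<lambda>t. u (t + r))"

definition mult_op :: "'g vec \<Rightarrow> 'g op" where
  "mult_op a u = (\<lambda>t. a t * u t)"

definition op_plus :: "'g op \<Rightarrow> 'g op \<Rightarrow> 'g op" where
  "op_plus A B u = (\<lambda>t. A u t + B u t)"

definition op_scale :: "complex \<Rightarrow> 'g op \<Rightarrow> 'g op" where
  "op_scale c A u = (\<lambda>t. c * A u t)"

definition op_minus :: "'g op \<Rightarrow> 'g op \<Rightarrow> 'g op" where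
  "op_minus A B u = (\<lambda>t. A u t - B u t)"

inductive_set BDO :: "('g::{group_add,countable}) op set" where
  shift: "Lsh r \<in> BDO"
| mult: "bdd_above (range (\<lambda>t. cmod (a t))) \<Longrightarrow> mult_op a \<in> BDO"
| plus: "A \<in> BDO \<Longrightarrow> B \<in> BDO \<Longrightarrow> op_plus A B \<in> BDO"
| scale: "A \<in> BDO \<Longrightarrow> op_scale c A \<in> BDO"
| comp: "A \<in> BDO \<Longrightarrow> B \<in> BDO \<Longrightarrow> A \<circ> B \<in> BDO"
| lim: "(\<And>k. As k \<in> BDO) \<Longrightarrow> bounded_op A \<Longrightarrow>
        (\<lambda>k. opnorm (op_minus (As k) A)) \<longlonglongrightarrow> 0 \<Longrightarrow> A \<in> BDO"

text \<open>Sequences are indexed by n = 1,2,3,... (index 0 is ignored).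
  A_n is an operator on im P_{Y_n}, represented as an operator B on l2(Gamma)
  with B = P_{Y_n} B P_{Y_n} on l2.\<close>

definition seqnorm :: "(nat \<Rightarrow> 'g op) \<Rightarrow> real" where
  "seqnorm X = (SUP n\<in>{1..}. opnorm (X n))"

definition FY :: "(nat \<Rightarrow> 'g set) \<Rightarrow> (nat \<Rightarrow> 'g op) set" where
  "FY Y = {X. (\<forall>n\<ge>1. bounded_op (X n) \<and>
                 (\<forall>u\<in>L2. X n u = proj (Y n) (X n (proj (Y n) u)))) \<and>
              bdd_above ((\<lambda>n. opnorm (X n)) ` {1..})}"

inductive_set SY :: "(nat \<Rightarrow> ('g::{group_add,countable}) set) \<Rightarrow> (nat \<Rightarrow> 'g op) set"
  for Y :: "nat \<Rightarrow> 'g set" where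
  gen: "A \<in> BDO \<Longrightarrow> (\<lambda>n. proj (Y n) \<circ> A \<circ> proj (Y n)) \<in> SY Y"
| plus: "X \<in> SY Y \<Longrightarrow> Z \<in> SY Y \<Longrightarrow> (\<lambda>n. op_plus (X n) (Z n)) \<in> SY Y"
| scale: "X \<in> SY Y \<Longrightarrow> (\<lambda>n. op_scale c (X n)) \<in> SY Y"
| comp: "X \<in> SY Y \<Longrightarrow> Z \<in> SY Y \<Longrightarrow> (\<lambda>n. X n \<circ> Z n) \<in> SY Y"
| adj: "X \<in> SY Y \<Longrightarrow> (\<lambda>n. adj (X n)) \<in> SY Y"
| lim: "(\<And>k. Xs k \<in> SY Y) \<Longrightarrow> X \<in> FY Y \<Longrightarrow>
        (\<lambda>k. seqnorm (\<lambda>n. op_minus (Xs k n) (X n))) \<longlonglongrightarrow> 0 \<Longrightarrow> X \<in> SY Y"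

definition setmul :: "'g::group_add set \<Rightarrow> 'g set \<Rightarrow> 'g set" where
  "setmul A B = {a + b | a b. a \<in> A \<and> b \<in> B}"

definition setinv :: "'g::group_add set \<Rightarrow> 'g set" where
  "setinv A = uminus ` A"

definition OmegaN :: "'g::group_add set \<Rightarrow> nat \<Rightarrow> 'g set" where
  "OmegaN \<Omega> n = {sum_list xs | xs. set xs \<subseteq> \<Omega> \<and> length xs \<le> n}"

definition int_Om :: "'g::group_add set \<Rightarrow> 'g set \<Rightarrow> 'g set" where
  "int_Om \<Omega> A = {a \<in> A. \<forall>w\<in>\<Omega>. w + a \<in> A}"

definition bd_Om :: "'g::group_add set \<Rightarrow> 'g set \<Rightarrow> 'g set" where
  "bd_Om \<Omega> A = A - int_Om \<Omega> A"

definition Zset :: "'g::group_add set \<Rightarrow> (nat \<Rightarrow> 'g set) \<Rightarrow> nat \<Rightarrow> 'g set" where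
  "Zset \<Omega> Y n = (let W = Y n \<union> OmegaN \<Omega> n in setmul (setmul W (setinv W)) W)"

text \<open>Op(A) = sum_{n>=1} R_{v_n} A_n P_{Y_n} R_{v_n}^{-1}; for inflating v the
  summands have pairwise disjoint supports, so the strong sum is the pointwise sum.\<close>
definition OpA :: "(nat \<Rightarrow> 'g::group_add set) \<Rightarrow> (nat \<Rightarrow> 'g) \<Rightarrow> (nat \<Rightarrow> 'g op) \<Rightarrow> 'g op" where
  "OpA Y v A u = (\<lambda>t. \<Sum>n. if n \<ge> 1 then Rsh (v n) (A n (proj (Y n) (Rsh (- v n) u))) t else 0)"

definition Gamma' :: "(nat \<Rightarrow> 'g::group_add set) \<Rightarrow> (nat \<Rightarrow> 'g) \<Rightarrow> 'g set" where
  "Gamma' Y v = UNIV - (\<Union>n\<in>{1..}. setmul (Y n) {- v n})"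

definition tends_to_inf :: "(nat \<Rightarrow> 'g) \<Rightarrow> bool" where
  "tends_to_inf h \<longleftrightarrow> (\<forall>G0. finite G0 \<longrightarrow> (\<forall>\<^sub>F n in sequentially. h n \<notin> G0))"

definition limop :: "'g::group_add op \<Rightarrow> (nat \<Rightarrow> 'g) \<Rightarrow> 'g op \<Rightarrow> bool" where
  "limop B h C \<longleftrightarrow>
     strong_lim (\<lambda>m. Rsh (- h m) \<circ> B \<circ> Rsh (h m)) C \<and>
     strong_lim (\<lambda>m. Rsh (- h m) \<circ> adj B \<circ> Rsh (h m)) (adj C)"

end

theory Submission
  imports Defs
begin


abbreviation L2s :: "'g vec \<Rightarrow> 'g set \<Rightarrow> real" where
  "L2s u F \<equiv> L2_set (\<lambda>t. cmod (u t)) F"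

lemma L2_set_sq: "(L2_set f F)^2 = (\<Sum>i\<in>F. (f i)^2)"
  by (simp add: L2_set_def sum_nonneg)

lemma l2norm_nonneg: "0 \<le> l2norm u"
  unfolding l2norm_def by (simp add: infsum_nonneg)

lemma l2_fin_le:
  assumes "u \<in> L2" "finite F" shows "L2s u F \<le> l2norm u"
proof -
  have s: "(\<lambda>t. (cmod (u t))^2) summable_on UNIV" using assms by (simp add: L2_def)
  have "(\<Sum>t\<in>F. (cmod (u t))^2) \<le> infsum (\<lambda>t. (cmod (u t))^2) UNIV"
    by (rule finite_sum_le_infsum[OF s assms(2)]) auto
  then show ?thesis unfolding L2_set_def l2norm_def by (simp add: real_sqrt_le_mono)
qed

lemma l2_from_fin:
  assumes B: "0 \<le> B" and le: "\<And>F. finite F \<Longrightarrow> L2s u F \<le> B"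
  shows "u \<in> L2 \<and> l2norm u \<le> B"
proof -
  have le2: "(\<Sum>t\<in>F. (cmod (u t))^2) \<le> B^2" if "finite F" for F
  proof -
    have "(L2s u F)^2 \<le> B^2" using le[OF that] by (simp add: power_mono)
    then show ?thesis by (simp add: L2_set_sq)
  qed
  have bdd: "bdd_above (sum (\<lambda>t. (cmod (u t))^2) ` {F. F \<subseteq> UNIV \<and> finite F})"
    by (rule bdd_aboveI2[where M="B^2"]) (use le2 in auto)
  have sm: "(\<lambda>t. (cmod (u t))^2) summable_on UNIV"
    by (rule nonneg_bdd_above_summable_on) (use bdd in auto)
  have "infsum (\<lambda>t. (cmod (u t))^2) UNIV \<le> B^2"
    by (rule infsum_le_finite_sums[OF sm]) (use le2 in auto)
  then have "l2norm u \<le> sqrt (B^2)" unfolding l2norm_def by (rule real_sqrt_le_mono)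
  then have "l2norm u \<le> B" using B by simp
  with B sm show ?thesis by (simp add: L2_def)
qed

lemma L2s_subset: "finite H \<Longrightarrow> G \<subseteq> H \<Longrightarrow> L2s u G \<le> L2s u H"
  unfolding L2_set_def by (intro real_sqrt_le_mono sum_mono2) auto

lemma L2s_cong0: "finite H \<Longrightarrow> (\<And>t. t \<in> H - G \<Longrightarrow> u t = 0) \<Longrightarrow> G \<subseteq> H \<Longrightarrow> L2s u H = L2s u G"
  unfolding L2_set_def by (rule arg_cong[where f=sqrt], rule sum.mono_neutral_right) auto

lemma fin_supp_L2:
  assumes S: "finite S" and z: "\<And>t. t \<notin> S \<Longrightarrow> u t = 0"
  shows "u \<in> L2" and "l2norm u = L2s u S"
proof -
  have *: "u \<in> L2 \<and> l2norm u \<le> L2s u S"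
  proof (rule l2_from_fin)
    fix F :: "'a set" assume F: "finite F"
    have "L2s u F = L2s u (F \<inter> S)" by (rule L2s_cong0) (use F z in auto)
    also have "\<dots> \<le> L2s u S" by (rule L2s_subset) (use S in auto)
    finally show "L2s u F \<le> L2s u S" .
  qed simp
  then show "u \<in> L2" by simp
  show "l2norm u = L2s u S" using * l2_fin_le[OF _ S, of u] by simp
qed

lemma zero_L2[simp]: "(\<lambda>t. 0) \<in> L2" and l2norm_zero[simp]: "l2norm (\<lambda>t. 0) = 0"
  using fin_supp_L2[of "{}" "\<lambda>t. 0"] by auto

lemma l2_cmp:
  assumes "v \<in> L2" "\<And>t. cmod (u t) \<le> cmod (v t)"
  shows "u \<in> L2 \<and> l2norm u \<le> l2norm v"
proof (rule l2_from_fin[OF l2norm_nonneg])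
  fix F :: "'a set" assume F: "finite F"
  have "L2s u F \<le> L2s v F" by (rule L2_set_mono) (use assms in auto)
  also have "\<dots> \<le> l2norm v" by (rule l2_fin_le[OF assms(1) F])
  finally show "L2s u F \<le> l2norm v" .
qed

lemma l2_eq0:
  assumes "u \<in> L2" "l2norm u = 0" shows "u = (\<lambda>t. 0)"
proof
  fix t
  have "L2s u {t} \<le> 0" using l2_fin_le[OF assms(1), of "{t}"] assms(2) by simp
  then show "u t = 0" by simp
qed

lemma l2_triangle:
  assumes "u \<in> L2" "w \<in> L2"
  shows "(\<lambda>t. u t + w t) \<in> L2 \<and> l2norm (\<lambda>t. u t + w t) \<le> l2norm u + l2norm w"
proof (rule l2_from_fin)
  show "0 \<le> l2norm u + l2norm w" by (simp add: l2norm_nonneg)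
  fix F :: "'a set" assume F: "finite F"
  have "L2s (\<lambda>t. u t + w t) F \<le> L2_set (\<lambda>t. cmod (u t) + cmod (w t)) F"
    by (rule L2_set_mono) (auto simp: norm_triangle_ineq)
  also have "\<dots> \<le> L2s u F + L2s w F" by (rule L2_set_triangle_ineq)
  also have "\<dots> \<le> l2norm u + l2norm w" using l2_fin_le[OF assms(1) F] l2_fin_le[OF assms(2) F] by simp
  finally show "L2s (\<lambda>t. u t + w t) F \<le> l2norm u + l2norm w" .
qed

lemma l2_scale:
  assumes "u \<in> L2"
  shows "(\<lambda>t. c * u t) \<in> L2 \<and> l2norm (\<lambda>t. c * u t) \<le> cmod c * l2norm u"
proof (rule l2_from_fin)
  show "0 \<le> cmod c * l2norm u" by (simp add: l2norm_nonneg)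
  fix F :: "'a set" assume F: "finite F"
  have "L2s (\<lambda>t. c * u t) F = cmod c * L2s u F"
    by (simp add: L2_set_right_distrib norm_mult)
  also have "\<dots> \<le> cmod c * l2norm u" using l2_fin_le[OF assms F] by (simp add: mult_left_mono)
  finally show "L2s (\<lambda>t. c * u t) F \<le> cmod c * l2norm u" .
qed

lemma l2_diff:
  assumes "u \<in> L2" "w \<in> L2"
  shows "(\<lambda>t. u t - w t) \<in> L2 \<and> l2norm (\<lambda>t. u t - w t) \<le> l2norm u + l2norm w"
proof -
  have m: "(\<lambda>t. (-1) * w t) \<in> L2 \<and> l2norm (\<lambda>t. (-1) * w t) \<le> l2norm w"
    using l2_scale[OF assms(2), of "-1"] by simp
  then show ?thesis using l2_triangle[OF assms(1), of "\<lambda>t. (-1) * w t"] by simp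
qed

lemma l2_garbage3:
  assumes b: "b \<in> L2" and c: "c \<in> L2"
  shows "l2norm (\<lambda>t. a t - b t - c t) \<le> l2norm a + l2norm b + l2norm c"
proof (cases "a \<in> L2")
  case True
  have 1: "(\<lambda>t. a t - b t) \<in> L2 \<and> l2norm (\<lambda>t. a t - b t) \<le> l2norm a + l2norm b"
    by (rule l2_diff[OF True b])
  then show ?thesis using l2_diff[of "\<lambda>t. a t - b t" c] c by simp
next
  case False
  have "(\<lambda>t. a t - b t - c t) \<notin> L2"
  proof
    assume h: "(\<lambda>t. a t - b t - c t) \<in> L2"
    have "(\<lambda>t. (a t - b t - c t) + c t) \<in> L2" using l2_triangle[OF h c] by simp
    then have "(\<lambda>t. a t - b t) \<in> L2" by simp
    then have "(\<lambda>t. (a t - b t) + b t) \<in> L2" using l2_triangle[OF _ b] by blast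
    then show False using False by simp
  qed
  then have "l2norm (\<lambda>t. a t - b t - c t) = 0"
    unfolding l2norm_def L2_def by (simp add: infsum_not_exists)
  then show ?thesis by (simp add: l2norm_nonneg)
qed

lemma L2s_reindex:
  fixes r :: "'g::group_add"
  shows "L2s (Rsh r u) F = L2s u ((\<lambda>t. t + r) ` F)"
proof -
  have "inj_on (\<lambda>t. t + r) F" by (auto simp: inj_on_def)
  then show ?thesis unfolding L2_set_def Rsh_def by (simp add: sum.reindex)
qed

lemma l2_Rsh:
  fixes r :: "'g::group_add"
  assumes "u \<in> L2" shows "Rsh r u \<in> L2 \<and> l2norm (Rsh r u) \<le> l2norm u"
proof (rule l2_from_fin[OF l2norm_nonneg])
  fix F :: "'g set" assume F: "finite F"
  show "L2s (Rsh r u) F \<le> l2norm u"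
    unfolding L2s_reindex using l2_fin_le[OF assms] F by simp
qed

lemma l2_Rsh_eq:
  fixes r :: "'g::group_add"
  assumes "u \<in> L2" shows "l2norm (Rsh r u) = l2norm u"
proof -
  have "Rsh (-r) (Rsh r u) = u" by (simp add: Rsh_def add.assoc)
  then show ?thesis using l2_Rsh[OF assms, of r] l2_Rsh[of "Rsh r u" "-r"] by force
qed

lemma l2_Lsh:
  fixes r :: "'g::group_add"
  assumes "u \<in> L2" shows "Lsh r u \<in> L2 \<and> l2norm (Lsh r u) \<le> l2norm u"
proof (rule l2_from_fin[OF l2norm_nonneg])
  fix F :: "'g set" assume F: "finite F"
  have "inj_on (\<lambda>t. -r + t) F" by (auto simp: inj_on_def)
  then have "L2s (Lsh r u) F = L2s u ((\<lambda>t. -r + t) ` F)"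
    unfolding L2_set_def Lsh_def by (simp add: sum.reindex)
  then show "L2s (Lsh r u) F \<le> l2norm u" using l2_fin_le[OF assms] F by simp
qed

lemma l2_proj:
  assumes "u \<in> L2" shows "proj X u \<in> L2 \<and> l2norm (proj X u) \<le> l2norm u"
  by (rule l2_cmp[OF assms]) (simp add: proj_def)

lemma l2_tail:
  assumes u: "u \<in> L2" and e: "e > 0"
  shows "\<exists>F. finite F \<and> (\<forall>G. finite G \<longrightarrow> G \<inter> F = {} \<longrightarrow> L2s u G \<le> e)"
proof -
  define f where "f t = (cmod (u t))^2" for t
  have s: "f summable_on UNIV" using u by (simp add: L2_def f_def[abs_def])
  have "(sum f \<longlongrightarrow> infsum f UNIV) (finite_subsets_at_top UNIV)" by (rule infsum_tendsto[OF s])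
  then have "\<forall>\<^sub>F F in finite_subsets_at_top UNIV. dist (sum f F) (infsum f UNIV) < e^2"
    using e by (simp add: tendsto_iff)
  then have "\<exists>X. finite X \<and> X \<subseteq> UNIV \<and> (\<forall>Y. finite Y \<and> X \<subseteq> Y \<and> Y \<subseteq> UNIV \<longrightarrow> dist (sum f Y) (infsum f UNIV) < e^2)"
    by (simp only: eventually_finite_subsets_at_top)
  then obtain X where X: "finite X" and XP: "\<And>Y. finite Y \<Longrightarrow> X \<subseteq> Y \<Longrightarrow> dist (sum f Y) (infsum f UNIV) < e^2"
    by auto
  have le: "sum f Y \<le> infsum f UNIV" if "finite Y" for Y
    by (rule finite_sum_le_infsum[OF s that]) (auto simp: f_def)
  show ?thesis
  proof (intro exI conjI allI impI)
    show "finite X" by fact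
    fix G assume G: "finite G" "G \<inter> X = {}"
    have "sum f (X \<union> G) = sum f X + sum f G" using G X by (simp add: sum.union_disjoint inf_commute)
    moreover have "sum f (X \<union> G) \<le> infsum f UNIV" using le G X by simp
    moreover have "infsum f UNIV - sum f X < e^2" using XP[OF X] le[OF X] by (simp add: dist_real_def)
    ultimately have "sum f G \<le> e^2" by simp
    then have "sqrt (sum f G) \<le> sqrt (e^2)" by (rule real_sqrt_le_mono)
    then show "L2s u G \<le> e" using e by (simp add: L2_set_def f_def)
  qed
qed

lemma l2_dom_conv:
  assumes u: "u \<in> L2" and dom: "\<And>j t. cmod (d j t) \<le> cmod (u t)"
    and ev: "\<And>t. \<forall>\<^sub>F j in sequentially. d j t = 0"
  shows "(\<lambda>j. l2norm (d j)) \<longlonglongrightarrow> 0"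
proof (rule LIMSEQ_I)
  fix r :: real assume r: "0 < r"
  obtain F where F: "finite F" and FG: "\<And>G. finite G \<Longrightarrow> G \<inter> F = {} \<Longrightarrow> L2s u G \<le> r/2"
    using l2_tail[OF u, of "r/2"] r by auto
  have "\<forall>\<^sub>F j in sequentially. \<forall>t\<in>F. d j t = 0"
    using F ev by (simp add: eventually_ball_finite)
  then obtain N where N: "\<And>j. j \<ge> N \<Longrightarrow> \<forall>t\<in>F. d j t = 0"
    unfolding eventually_sequentially by blast
  show "\<exists>no. \<forall>n\<ge>no. norm (l2norm (d n) - 0) < r"
  proof (intro exI allI impI)
    fix j assume j: "j \<ge> N"
    have "d j \<in> L2 \<and> l2norm (d j) \<le> r/2"
    proof (rule l2_from_fin)
      show "0 \<le> r/2" using r by simp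
      fix H :: "'a set" assume H: "finite H"
      have "L2s (d j) H = L2s (d j) (H - F)" by (rule L2s_cong0) (use H N[OF j] in auto)
      also have "\<dots> \<le> L2s u (H - F)" by (rule L2_set_mono) (use dom in auto)
      also have "\<dots> \<le> r/2" using FG[of "H - F"] H by auto
      finally show "L2s (d j) H \<le> r/2" .
    qed
    then show "norm (l2norm (d j) - 0) < r" using r l2norm_nonneg[of "d j"] by simp
  qed
qed




definition lin :: "'g op \<Rightarrow> bool" where
  "lin B \<longleftrightarrow> (\<forall>u\<in>L2. \<forall>v\<in>L2. \<forall>c::complex. B (\<lambda>t. u t + c * v t) = (\<lambda>t. B u t + c * B v t))"

lemma lin_app: "lin B \<Longrightarrow> u \<in> L2 \<Longrightarrow> v \<in> L2 \<Longrightarrow> B (\<lambda>t. u t + c * v t) = (\<lambda>t. B u t + c * B v t)"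
  unfolding lin_def by blast

lemma lin_zero: "lin B \<Longrightarrow> B (\<lambda>t. 0) = (\<lambda>t. 0)"
proof -
  assume l: "lin B"
  have e: "B (\<lambda>t. 0 + 1 * 0) = (\<lambda>t. B (\<lambda>t. 0) t + 1 * B (\<lambda>t. 0) t)"
    by (rule lin_app[OF l zero_L2 zero_L2])
  have "B (\<lambda>t. 0) t = B (\<lambda>t. 0) t + B (\<lambda>t. 0) t" for t using fun_cong[OF e, of t] by simp
  then show ?thesis by (intro ext) simp
qed

lemma lin_scale: "lin B \<Longrightarrow> u \<in> L2 \<Longrightarrow> B (\<lambda>t. c * u t) = (\<lambda>t. c * B u t)"
proof -
  assume l: "lin B" and u: "u \<in> L2"
  have "B (\<lambda>t. 0 + c * u t) = (\<lambda>t. B (\<lambda>t. 0) t + c * B u t)"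
    by (rule lin_app[OF l zero_L2 u])
  then show ?thesis using lin_zero[OF l] by simp
qed

lemma lin_add: "lin B \<Longrightarrow> u \<in> L2 \<Longrightarrow> v \<in> L2 \<Longrightarrow> B (\<lambda>t. u t + v t) = (\<lambda>t. B u t + B v t)"
  using lin_app[of B u v 1] by simp

lemma bop_lin: "bounded_op B \<Longrightarrow> lin B"
  unfolding bounded_op_def lin_def by blast

lemma bop_L2: "bounded_op B \<Longrightarrow> u \<in> L2 \<Longrightarrow> B u \<in> L2"
  unfolding bounded_op_def by blast

lemma bop_bound: "bounded_op B \<Longrightarrow> \<exists>K\<ge>0. \<forall>u\<in>L2. l2norm (B u) \<le> K * l2norm u"
proof -
  assume "bounded_op B"
  then obtain K where K: "\<forall>u\<in>L2. l2norm (B u) \<le> K * l2norm u" unfolding bounded_op_def by blast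
  have "l2norm (B u) \<le> max K 0 * l2norm u" if u: "u \<in> L2" for u
  proof -
    have "l2norm (B u) \<le> K * l2norm u" using K u by blast
    also have "\<dots> \<le> max K 0 * l2norm u" by (rule mult_right_mono) (auto simp: l2norm_nonneg)
    finally show ?thesis .
  qed
  then show ?thesis by (intro exI[of _ "max K 0"]) auto
qed

lemma bopI:
  assumes "\<And>u. u \<in> L2 \<Longrightarrow> B u \<in> L2" "lin B" "K \<ge> 0" "\<And>u. u \<in> L2 \<Longrightarrow> l2norm (B u) \<le> K * l2norm u"
  shows "bounded_op B"
  using assms unfolding bounded_op_def lin_def by blast

lemma BDO_bop: "A \<in> BDO \<Longrightarrow> bounded_op A"
proof (induction rule: BDO.induct)
  case (shift r)
  show ?case
  proof (rule bopI[where K=1])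
    show "lin (Lsh r)" by (simp add: lin_def Lsh_def)
  qed (auto simp: l2_Lsh)
next
  case (mult a)
  then obtain K where K: "\<And>t. cmod (a t) \<le> K" by (auto simp: bdd_above_def)
  have K0: "0 \<le> K" using K[of undefined] norm_ge_zero order_trans by blast
  have main: "mult_op a u \<in> L2 \<and> l2norm (mult_op a u) \<le> K * l2norm u" if u: "u \<in> L2" for u
  proof (rule l2_from_fin)
    show "0 \<le> K * l2norm u" using K0 by (simp add: l2norm_nonneg)
    fix F :: "'a set" assume F: "finite F"
    have "L2s (mult_op a u) F \<le> L2_set (\<lambda>t. K * cmod (u t)) F"
      by (rule L2_set_mono) (auto simp: mult_op_def norm_mult intro: mult_right_mono K)
    also have "\<dots> = K * L2s u F" by (simp add: L2_set_right_distrib K0)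
    also have "\<dots> \<le> K * l2norm u" using l2_fin_le[OF u F] K0 by (simp add: mult_left_mono)
    finally show "L2s (mult_op a u) F \<le> K * l2norm u" .
  qed
  show ?case
  proof (rule bopI[where K=K])
    show "lin (mult_op a)" unfolding lin_def mult_op_def by (simp add: distrib_left mult.left_commute)
  qed (use main K0 in auto)
next
  case (plus A B)
  obtain K1 where K1: "K1 \<ge> 0" "\<forall>u\<in>L2. l2norm (A u) \<le> K1 * l2norm u" using bop_bound[OF plus(3)] by blast
  obtain K2 where K2: "K2 \<ge> 0" "\<forall>u\<in>L2. l2norm (B u) \<le> K2 * l2norm u" using bop_bound[OF plus(4)] by blast
  show ?case
  proof (rule bopI[where K="K1+K2"])
    fix u :: "'a vec" assume u: "u \<in> L2"
    have t: "(\<lambda>t. A u t + B u t) \<in> L2 \<and> l2norm (\<lambda>t. A u t + B u t) \<le> l2norm (A u) + l2norm (B u)"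
      by (rule l2_triangle) (use bop_L2 plus u in auto)
    then show "op_plus A B u \<in> L2" by (simp add: op_plus_def)
    have "l2norm (A u) \<le> K1 * l2norm u" "l2norm (B u) \<le> K2 * l2norm u" using K1 K2 u by auto
    then show "l2norm (op_plus A B u) \<le> (K1 + K2) * l2norm u"
      using t unfolding op_plus_def distrib_right by linarith
  next
    show "lin (op_plus A B)"
      using bop_lin[OF plus(3)] bop_lin[OF plus(4)] unfolding lin_def op_plus_def
      by (simp add: distrib_left add.assoc add.left_commute)
  qed (use K1 K2 in simp)
next
  case (scale A c)
  obtain K1 where K1: "K1 \<ge> 0" "\<forall>u\<in>L2. l2norm (A u) \<le> K1 * l2norm u" using bop_bound[OF scale(2)] by blast
  show ?case
  proof (rule bopI[where K="cmod c * K1"])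
    fix u :: "'a vec" assume u: "u \<in> L2"
    have t: "(\<lambda>t. c * A u t) \<in> L2 \<and> l2norm (\<lambda>t. c * A u t) \<le> cmod c * l2norm (A u)"
      by (rule l2_scale) (use bop_L2 scale u in auto)
    then show "op_scale c A u \<in> L2" by (simp add: op_scale_def)
    have "cmod c * l2norm (A u) \<le> cmod c * (K1 * l2norm u)" using K1 u by (simp add: mult_left_mono)
    then show "l2norm (op_scale c A u) \<le> cmod c * K1 * l2norm u"
      using t by (simp add: op_scale_def)
  next
    show "lin (op_scale c A)"
      using bop_lin[OF scale(2)] unfolding lin_def op_scale_def
      by (simp add: distrib_left mult.left_commute)
  qed (use K1 in simp)
next
  case (comp A B)
  obtain K1 where K1: "K1 \<ge> 0" "\<forall>u\<in>L2. l2norm (A u) \<le> K1 * l2norm u" using bop_bound[OF comp(3)] by blast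
  obtain K2 where K2: "K2 \<ge> 0" "\<forall>u\<in>L2. l2norm (B u) \<le> K2 * l2norm u" using bop_bound[OF comp(4)] by blast
  show ?case
  proof (rule bopI[where K="K1*K2"])
    fix u :: "'a vec" assume u: "u \<in> L2"
    have Bu: "B u \<in> L2" using bop_L2[OF comp(4) u] .
    then show "(A \<circ> B) u \<in> L2" using bop_L2[OF comp(3)] by simp
    have "l2norm (A (B u)) \<le> K1 * l2norm (B u)" using K1 Bu by blast
    also have "\<dots> \<le> K1 * (K2 * l2norm u)" using K2 u K1 by (simp add: mult_left_mono)
    finally show "l2norm ((A \<circ> B) u) \<le> K1 * K2 * l2norm u" by simp
  next
    show "lin (A \<circ> B)"
      using bop_lin[OF comp(3)] bop_lin[OF comp(4)] bop_L2[OF comp(4)] unfolding lin_def by simp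
  qed (use K1 K2 in simp)
next
  case (lim As A)
  then show ?case by simp
qed

lemma opnorm_bound:
  assumes B: "bounded_op B" and u: "u \<in> L2"
  shows "l2norm (B u) \<le> opnorm B * l2norm u"
proof -
  obtain K where K: "K \<ge> 0" "\<forall>u\<in>L2. l2norm (B u) \<le> K * l2norm u" using bop_bound[OF B] by blast
  let ?S = "{l2norm (B u) | u. u \<in> L2 \<and> l2norm u \<le> 1}"
  have bdd: "bdd_above ?S"
  proof (rule bdd_aboveI[where M=K])
    fix x assume "x \<in> ?S"
    then obtain w where w: "w \<in> L2" "l2norm w \<le> 1" and x: "x = l2norm (B w)" by blast
    have "l2norm (B w) \<le> K * l2norm w" using K w by blast
    also have "\<dots> \<le> K" using w K by (simp add: mult_left_le)
    finally show "x \<le> K" using x by simp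
  qed
  have up: "l2norm (B w) \<le> opnorm B" if "w \<in> L2" "l2norm w \<le> 1" for w
    unfolding opnorm_def by (rule cSup_upper[OF _ bdd]) (use that in blast)
  have lB: "lin B" using bop_lin[OF B] .
  show ?thesis
  proof (cases "l2norm u = 0")
    case True
    then have "u = (\<lambda>t. 0)" using l2_eq0 u by blast
    then show ?thesis using lin_zero[OF lB] True by simp
  next
    case False
    define n where "n = l2norm u"
    have n: "n > 0" using False l2norm_nonneg[of u] by (simp add: n_def)
    define u' where "u' = (\<lambda>t. complex_of_real (1/n) * u t)"
    have u': "u' \<in> L2 \<and> l2norm u' \<le> cmod (complex_of_real (1/n)) * l2norm u"
      unfolding u'_def by (rule l2_scale[OF u])
    then have "l2norm u' \<le> 1" using n by (simp add: n_def norm_divide)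
    then have 1: "l2norm (B u') \<le> opnorm B" using up u' by blast
    have Bu': "B u' = (\<lambda>t. complex_of_real (1/n) * B u t)" unfolding u'_def by (rule lin_scale[OF lB u])
    have nn: "complex_of_real n * complex_of_real (1/n) = 1" using n by (simp flip: of_real_mult)
    have "B u = (\<lambda>t. complex_of_real n * B u' t)"
      unfolding Bu' mult.assoc[symmetric] nn by simp
    then have "l2norm (B u) \<le> cmod (complex_of_real n) * l2norm (B u')"
      using l2_scale[of "B u'" "complex_of_real n"] bop_L2[OF B] u' by simp
    also have "\<dots> \<le> n * opnorm B" using 1 n by simp
    finally show ?thesis by (simp add: n_def mult.commute)
  qed
qed

lemma opnorm_nonneg:
  assumes B: "bounded_op B" shows "0 \<le> opnorm B"
proof -
  have "l2norm (B (\<lambda>t. 0)) \<le> opnorm B * 0" using opnorm_bound[OF B zero_L2] by simp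
  obtain K where K: "K \<ge> 0" "\<forall>u\<in>L2. l2norm (B u) \<le> K * l2norm u" using bop_bound[OF B] by blast
  let ?S = "{l2norm (B u) | u. u \<in> L2 \<and> l2norm u \<le> 1}"
  have bdd: "bdd_above ?S"
  proof (rule bdd_aboveI[where M=K])
    fix x assume "x \<in> ?S"
    then obtain w where w: "w \<in> L2" "l2norm w \<le> 1" and x: "x = l2norm (B w)" by blast
    have "l2norm (B w) \<le> K * l2norm w" using K w by blast
    also have "\<dots> \<le> K" using w K by (simp add: mult_left_le)
    finally show "x \<le> K" using x by simp
  qed
  have "l2norm (B (\<lambda>t. 0)) \<le> opnorm B"
    unfolding opnorm_def by (rule cSup_upper[OF _ bdd]) auto
  then show ?thesis by (metis l2norm_nonneg order_trans)
qed




definition goodop :: "'g set \<Rightarrow> real \<Rightarrow> 'g op \<Rightarrow> bool" where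
  "goodop Y M B \<longleftrightarrow> lin B \<and> (\<forall>u\<in>L2. \<forall>t. t \<notin> Y \<longrightarrow> B u t = 0) \<and>
     (\<forall>u\<in>L2. B (proj Y u) = B u) \<and> (\<forall>u\<in>L2. l2norm (B u) \<le> M * l2norm u)"

definition dl :: "'g \<Rightarrow> 'g vec" where "dl s = (\<lambda>t. if s = t then 1 else 0)"

lemma dl_L2[simp]: "dl s \<in> L2"
  by (rule fin_supp_L2(1)[of "{s}"]) (auto simp: dl_def)

lemma proj_lin: "proj Y (\<lambda>t. u t + c * v t) = (\<lambda>t. proj Y u t + c * proj Y v t)"
  by (auto simp: proj_def)

lemma proj_proj[simp]: "proj Y (proj Y u) = proj Y u"
  by (auto simp: proj_def)

lemma goodop_L2: "finite Y \<Longrightarrow> goodop Y M B \<Longrightarrow> u \<in> L2 \<Longrightarrow> B u \<in> L2"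
  unfolding goodop_def by (intro fin_supp_L2(1)[of Y]) auto

lemma infsum_supp:
  fixes f :: "'a \<Rightarrow> complex"
  assumes "finite S" "\<And>t. t \<notin> S \<Longrightarrow> f t = 0"
  shows "infsum f UNIV = sum f S"
proof -
  have "infsum f UNIV = infsum f S" by (rule infsum_cong_neutral) (use assms in auto)
  then show ?thesis using assms by simp
qed

lemma l2inner_supp:
  "finite S \<Longrightarrow> (\<And>t. t \<notin> S \<Longrightarrow> a t = 0) \<Longrightarrow> l2inner a b = (\<Sum>t\<in>S. a t * cnj (b t))"
  unfolding l2inner_def by (rule infsum_supp) auto

lemma l2inner_supp2:
  "finite S \<Longrightarrow> (\<And>t. t \<notin> S \<Longrightarrow> b t = 0) \<Longrightarrow> l2inner a b = (\<Sum>t\<in>S. a t * cnj (b t))"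
  unfolding l2inner_def by (rule infsum_supp) auto

lemma l2inner_dl: "l2inner (dl s) w = cnj (w s)"
  by (subst l2inner_supp[of "{s}"]) (auto simp: dl_def)

lemma lin_sum:
  assumes l: "lin X" and S: "finite S"
  shows "X (\<lambda>t. \<Sum>s\<in>S. c s * dl s t) = (\<lambda>t. \<Sum>s\<in>S. c s * X (dl s) t)"
  using S
proof (induction S rule: finite_induct)
  case empty
  then show ?case using lin_zero[OF l] by simp
next
  case (insert a F)
  have w: "(\<lambda>t. \<Sum>s\<in>F. c s * dl s t) \<in> L2"
    by (rule fin_supp_L2(1)[OF insert(1)]) (auto simp: dl_def intro!: sum.neutral)
  have "X (\<lambda>t. \<Sum>s\<in>insert a F. c s * dl s t) = X (\<lambda>t. (\<Sum>s\<in>F. c s * dl s t) + c a * dl a t)"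
    using insert by (simp add: add.commute)
  also have "\<dots> = (\<lambda>t. X (\<lambda>t. \<Sum>s\<in>F. c s * dl s t) t + c a * X (dl a) t)"
    by (rule lin_app[OF l w dl_L2])
  also have "\<dots> = (\<lambda>t. \<Sum>s\<in>insert a F. c s * X (dl s) t)"
    using insert by (simp add: add.commute)
  finally show ?case .
qed

lemma proj_expand:
  assumes "finite Y" shows "proj Y u = (\<lambda>t. \<Sum>s\<in>Y. u s * dl s t)"
proof
  fix t
  have "(\<Sum>s\<in>Y. u s * dl s t) = (\<Sum>s\<in>Y. if s = t then u s else 0)"
    by (rule sum.cong) (auto simp: dl_def)
  also have "\<dots> = (if t \<in> Y then u t else 0)" by (rule sum.delta[OF assms])
  finally show "proj Y u t = (\<Sum>s\<in>Y. u s * dl s t)" by (simp add: proj_def)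
qed

lemma gen_goodop:
  assumes A: "bounded_op A" and K: "0 \<le> K" "\<forall>u\<in>L2. l2norm (A u) \<le> K * l2norm u"
  shows "goodop Y K (proj Y \<circ> A \<circ> proj Y)"
  unfolding goodop_def
proof (intro conjI ballI allI impI)
  show "lin (proj Y \<circ> A \<circ> proj Y)" unfolding lin_def
  proof (intro ballI allI)
    fix u v :: "'a vec" and c assume u: "u \<in> L2" and v: "v \<in> L2"
    have pu: "proj Y u \<in> L2" "proj Y v \<in> L2" using l2_proj u v by auto
    show "(proj Y \<circ> A \<circ> proj Y) (\<lambda>t. u t + c * v t) =
          (\<lambda>t. (proj Y \<circ> A \<circ> proj Y) u t + c * (proj Y \<circ> A \<circ> proj Y) v t)"
      by (simp add: proj_lin lin_app[OF bop_lin[OF A] pu])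
  qed
next
  fix u :: "'a vec" and t assume "u \<in> L2" "t \<notin> Y"
  then show "(proj Y \<circ> A \<circ> proj Y) u t = 0" by (simp add: proj_def)
next
  fix u :: "'a vec" assume "u \<in> L2"
  show "(proj Y \<circ> A \<circ> proj Y) (proj Y u) = (proj Y \<circ> A \<circ> proj Y) u" by simp
next
  fix u :: "'a vec" assume u: "u \<in> L2"
  have pu: "proj Y u \<in> L2 \<and> l2norm (proj Y u) \<le> l2norm u" using l2_proj[OF u] .
  have Apu: "A (proj Y u) \<in> L2" using bop_L2[OF A] pu by blast
  have "l2norm (proj Y (A (proj Y u))) \<le> l2norm (A (proj Y u))" using l2_proj[OF Apu] by blast
  also have "\<dots> \<le> K * l2norm (proj Y u)" using K pu by blast
  also have "\<dots> \<le> K * l2norm u" using pu K by (simp add: mult_left_mono)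
  finally show "l2norm ((proj Y \<circ> A \<circ> proj Y) u) \<le> K * l2norm u" by simp
qed

lemma plus_goodop:
  assumes Y: "finite Y" and g1: "goodop Y M1 B1" and g2: "goodop Y M2 B2"
  shows "goodop Y (M1 + M2) (op_plus B1 B2)"
  unfolding goodop_def
proof (intro conjI ballI allI impI)
  show "lin (op_plus B1 B2)"
    using g1 g2 unfolding goodop_def lin_def op_plus_def
    by (simp add: distrib_left add.assoc add.left_commute)
next
  fix u :: "'a vec" and t assume "u \<in> L2" "t \<notin> Y"
  then show "op_plus B1 B2 u t = 0" using g1 g2 by (simp add: op_plus_def goodop_def)
next
  fix u :: "'a vec" assume "u \<in> L2"
  then show "op_plus B1 B2 (proj Y u) = op_plus B1 B2 u" using g1 g2 by (simp add: op_plus_def goodop_def)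
next
  fix u :: "'a vec" assume u: "u \<in> L2"
  have t: "(\<lambda>t. B1 u t + B2 u t) \<in> L2 \<and> l2norm (\<lambda>t. B1 u t + B2 u t) \<le> l2norm (B1 u) + l2norm (B2 u)"
    by (rule l2_triangle) (use goodop_L2[OF Y] g1 g2 u in auto)
  have "l2norm (B1 u) \<le> M1 * l2norm u" "l2norm (B2 u) \<le> M2 * l2norm u" using g1 g2 u by (auto simp: goodop_def)
  then show "l2norm (op_plus B1 B2 u) \<le> (M1 + M2) * l2norm u"
    using t unfolding op_plus_def distrib_right by linarith
qed

lemma scale_goodop:
  assumes Y: "finite Y" and g1: "goodop Y M1 B1"
  shows "goodop Y (cmod c * M1) (op_scale c B1)"
  unfolding goodop_def
proof (intro conjI ballI allI impI)
  show "lin (op_scale c B1)"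
    using g1 unfolding goodop_def lin_def op_scale_def
    by (simp add: distrib_left mult.left_commute)
next
  fix u :: "'a vec" and t assume "u \<in> L2" "t \<notin> Y"
  then show "op_scale c B1 u t = 0" using g1 by (simp add: op_scale_def goodop_def)
next
  fix u :: "'a vec" assume "u \<in> L2"
  then show "op_scale c B1 (proj Y u) = op_scale c B1 u" using g1 by (simp add: op_scale_def goodop_def)
next
  fix u :: "'a vec" assume u: "u \<in> L2"
  have t: "(\<lambda>t. c * B1 u t) \<in> L2 \<and> l2norm (\<lambda>t. c * B1 u t) \<le> cmod c * l2norm (B1 u)"
    by (rule l2_scale) (use goodop_L2[OF Y] g1 u in auto)
  have "l2norm (B1 u) \<le> M1 * l2norm u" using g1 u by (auto simp: goodop_def)
  then have "cmod c * l2norm (B1 u) \<le> cmod c * (M1 * l2norm u)" by (simp add: mult_left_mono)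
  then show "l2norm (op_scale c B1 u) \<le> cmod c * M1 * l2norm u"
    using t unfolding op_scale_def by simp
qed

lemma comp_goodop:
  assumes Y: "finite Y" and g1: "goodop Y M1 B1" and g2: "goodop Y M2 B2" and M1: "0 \<le> M1"
  shows "goodop Y (M1 * M2) (B1 \<circ> B2)"
  unfolding goodop_def
proof (intro conjI ballI allI impI)
  have L: "\<And>u. u \<in> L2 \<Longrightarrow> B2 u \<in> L2" using goodop_L2[OF Y g2] .
  show "lin (B1 \<circ> B2)"
    using g1 g2 L unfolding goodop_def lin_def by simp
next
  fix u :: "'a vec" and t assume "u \<in> L2" "t \<notin> Y"
  then show "(B1 \<circ> B2) u t = 0" using g1 goodop_L2[OF Y g2] by (simp add: goodop_def)
next
  fix u :: "'a vec" assume "u \<in> L2"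
  then show "(B1 \<circ> B2) (proj Y u) = (B1 \<circ> B2) u" using g2 by (simp add: goodop_def)
next
  fix u :: "'a vec" assume u: "u \<in> L2"
  have Bu: "B2 u \<in> L2" using goodop_L2[OF Y g2 u] .
  have "l2norm (B1 (B2 u)) \<le> M1 * l2norm (B2 u)" using g1 Bu by (auto simp: goodop_def)
  also have "\<dots> \<le> M1 * (M2 * l2norm u)" using g2 u M1 by (auto simp: goodop_def intro: mult_left_mono)
  finally show "l2norm ((B1 \<circ> B2) u) \<le> M1 * M2 * l2norm u" by simp
qed

lemma adj_goodop:
  assumes Y: "finite Y" and g: "goodop Y M X" and M0: "0 \<le> M"
  shows "goodop Y M (adj X)"
proof -
  have l: "lin X" and supp: "\<And>u t. u \<in> L2 \<Longrightarrow> t \<notin> Y \<Longrightarrow> X u t = 0"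
    and idem: "\<And>u. u \<in> L2 \<Longrightarrow> X (proj Y u) = X u"
    and bd: "\<And>u. u \<in> L2 \<Longrightarrow> l2norm (X u) \<le> M * l2norm u"
    using g unfolding goodop_def by auto
  define C0 where "C0 v = (\<lambda>s. if s \<in> Y then \<Sum>t\<in>Y. cnj (X (dl s) t) * v t else 0)" for v
  have XL2: "X u \<in> L2" if "u \<in> L2" for u using goodop_L2[OF Y g that] .
  have Xexp: "X u = (\<lambda>t. \<Sum>s\<in>Y. u s * X (dl s) t)" if u: "u \<in> L2" for u
  proof -
    have "X u = X (proj Y u)" using idem[OF u] by simp
    also have "\<dots> = X (\<lambda>t. \<Sum>s\<in>Y. u s * dl s t)" by (simp add: proj_expand[OF Y])
    also have "\<dots> = (\<lambda>t. \<Sum>s\<in>Y. u s * X (dl s) t)" by (rule lin_sum[OF l Y])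
    finally show ?thesis .
  qed
  have C0L2: "C0 v \<in> L2" for v by (rule fin_supp_L2(1)[OF Y]) (auto simp: C0_def)
  have key: "l2inner (X u) v = l2inner u (C0 v)" if u: "u \<in> L2" and v: "v \<in> L2" for u v
  proof -
    have "l2inner (X u) v = (\<Sum>t\<in>Y. X u t * cnj (v t))"
      by (rule l2inner_supp[OF Y]) (use supp u in auto)
    also have "\<dots> = (\<Sum>t\<in>Y. \<Sum>s\<in>Y. u s * X (dl s) t * cnj (v t))"
      by (simp add: Xexp[OF u] sum_distrib_right)
    also have "\<dots> = (\<Sum>s\<in>Y. \<Sum>t\<in>Y. u s * X (dl s) t * cnj (v t))"
      by (rule sum.swap)
    also have "\<dots> = (\<Sum>s\<in>Y. u s * cnj (C0 v s))"
      by (rule sum.cong) (auto simp: C0_def sum_distrib_left mult.assoc)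
    also have "\<dots> = l2inner u (C0 v)"
      by (rule l2inner_supp2[OF Y, symmetric]) (auto simp: C0_def)
    finally show ?thesis .
  qed
  have PC: "(\<forall>v\<in>L2. adj X v \<in> L2) \<and> (\<forall>u\<in>L2. \<forall>v\<in>L2. l2inner (X u) v = l2inner u (adj X v))"
    unfolding adj_def by (rule someI[where x=C0]) (use C0L2 key in auto)
  have eq: "adj X v = C0 v" if v: "v \<in> L2" for v
  proof
    fix s
    have "cnj (adj X v s) = l2inner (dl s) (adj X v)" by (simp add: l2inner_dl)
    also have "\<dots> = l2inner (X (dl s)) v" using PC v by simp
    also have "\<dots> = l2inner (dl s) (C0 v)" using key[OF dl_L2 v] .
    also have "\<dots> = cnj (C0 v s)" by (simp add: l2inner_dl)
    finally show "adj X v s = C0 v s" by simp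
  qed
  have C0lin: "C0 (\<lambda>t. u t + c * v t) = (\<lambda>t. C0 u t + c * C0 v t)" for u v c
    by (auto simp: C0_def distrib_left sum.distrib sum_distrib_left mult.left_commute)
  have C0bd: "l2norm (C0 v) \<le> M * l2norm v" if v: "v \<in> L2" for v
  proof -
    define a where "a = C0 v"
    have aL: "a \<in> L2" using C0L2 by (simp add: a_def)
    have na: "l2norm a = L2s a Y" by (rule fin_supp_L2(2)[OF Y]) (auto simp: a_def C0_def)
    have "complex_of_real ((l2norm a)^2) = (\<Sum>s\<in>Y. complex_of_real ((cmod (a s))^2))"
      by (simp add: na L2_set_sq)
    also have "\<dots> = (\<Sum>s\<in>Y. a s * cnj (a s))" by (rule sum.cong[OF refl], rule complex_norm_square)
    also have "\<dots> = l2inner a a" by (rule l2inner_supp[OF Y, symmetric]) (auto simp: a_def C0_def)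
    also have "\<dots> = l2inner (X a) v" using key[OF aL v] by (simp add: a_def)
    also have "\<dots> = (\<Sum>t\<in>Y. X a t * cnj (v t))" by (rule l2inner_supp[OF Y]) (use supp aL in auto)
    finally have e: "complex_of_real ((l2norm a)^2) = (\<Sum>t\<in>Y. X a t * cnj (v t))" .
    have "(l2norm a)^2 = cmod (complex_of_real ((l2norm a)^2))" by (simp only: norm_of_real) simp
    also have "\<dots> \<le> (\<Sum>t\<in>Y. cmod (X a t) * cmod (v t))" unfolding e
      by (rule order_trans[OF norm_sum]) (simp add: norm_mult)
    also have "\<dots> = (\<Sum>t\<in>Y. \<bar>cmod (X a t)\<bar> * \<bar>cmod (v t)\<bar>)" by simp
    also have "\<dots> \<le> L2s (X a) Y * L2s v Y" by (rule L2_set_mult_ineq)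
    also have "\<dots> \<le> l2norm (X a) * l2norm v"
      by (rule mult_mono) (use l2_fin_le[OF XL2[OF aL] Y] l2_fin_le[OF v Y] l2norm_nonneg in auto)
    also have "\<dots> \<le> (M * l2norm a) * l2norm v"
      by (rule mult_right_mono) (use bd[OF aL] l2norm_nonneg in auto)
    finally have sq: "l2norm a * l2norm a \<le> (M * l2norm v) * l2norm a"
      by (simp add: power2_eq_square mult_ac)
    show ?thesis
    proof (cases "l2norm a = 0")
      case True then show ?thesis using M0 l2norm_nonneg[of v] by (simp add: a_def)
    next
      case False
      then have "l2norm a > 0" using l2norm_nonneg[of a] by simp
      with sq have "l2norm a \<le> M * l2norm v" by (simp add: mult_le_cancel_right_pos)
      then show ?thesis by (simp add: a_def)
    qed
  qed
  show ?thesis unfolding goodop_def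
  proof (intro conjI ballI allI impI)
    show "lin (adj X)" unfolding lin_def
    proof (intro ballI allI)
      fix u v :: "'a vec" and c assume u: "u \<in> L2" and v: "v \<in> L2"
      have "(\<lambda>t. c * v t) \<in> L2" using l2_scale[OF v] by blast
      then have "(\<lambda>t. u t + c * v t) \<in> L2" using l2_triangle[OF u] by blast
      then show "adj X (\<lambda>t. u t + c * v t) = (\<lambda>t. adj X u t + c * adj X v t)"
        using eq u v C0lin by simp
    qed
  next
    fix u :: "'a vec" and t assume "u \<in> L2" "t \<notin> Y"
    then show "adj X u t = 0" using eq by (simp add: C0_def)
  next
    fix u :: "'a vec" assume u: "u \<in> L2"
    have "proj Y u \<in> L2" using l2_proj[OF u] by blast
    moreover have "C0 (proj Y u) = C0 u" by (auto simp: C0_def proj_def intro!: sum.cong)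
    ultimately show "adj X (proj Y u) = adj X u" using eq u by simp
  next
    fix u :: "'a vec" assume u: "u \<in> L2"
    then show "l2norm (adj X u) \<le> M * l2norm u" using eq C0bd by simp
  qed
qed

lemma FY_goodop:
  assumes X: "X \<in> FY Y"
  shows "\<exists>M\<ge>0. \<forall>n\<ge>1. goodop (Y n) M (X n)"
proof -
  have bo: "\<And>n. n \<ge> 1 \<Longrightarrow> bounded_op (X n)"
    and pr: "\<And>n u. n \<ge> 1 \<Longrightarrow> u \<in> L2 \<Longrightarrow> X n u = proj (Y n) (X n (proj (Y n) u))"
    and bdd: "bdd_above ((\<lambda>n. opnorm (X n)) ` {1..})"
    using X unfolding FY_def by auto
  obtain M0 where M0: "\<And>n. n \<ge> 1 \<Longrightarrow> opnorm (X n) \<le> M0"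
    using bdd unfolding bdd_above_def by auto
  have "goodop (Y n) (max M0 0) (X n)" if n: "n \<ge> 1" for n
    unfolding goodop_def
  proof (intro conjI ballI allI impI)
    show "lin (X n)" using bop_lin[OF bo[OF n]] .
  next
    fix u :: "'a vec" and t assume "u \<in> L2" "t \<notin> Y n"
    then show "X n u t = 0" using pr[OF n] by (metis proj_def)
  next
    fix u :: "'a vec" assume u: "u \<in> L2"
    have pu: "proj (Y n) u \<in> L2" using l2_proj[OF u] by blast
    show "X n (proj (Y n) u) = X n u" using pr[OF n pu] pr[OF n u] by simp
  next
    fix u :: "'a vec" assume u: "u \<in> L2"
    have "l2norm (X n u) \<le> opnorm (X n) * l2norm u" by (rule opnorm_bound[OF bo[OF n] u])
    also have "\<dots> \<le> max M0 0 * l2norm u" using M0[OF n] by (intro mult_right_mono) (auto simp: l2norm_nonneg)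
    finally show "l2norm (X n u) \<le> max M0 0 * l2norm u" .
  qed
  then show ?thesis by (intro exI[of _ "max M0 0"]) auto
qed

lemma SY_good:
  assumes Yf: "\<forall>n\<ge>1. finite (Y n)"
  shows "X \<in> SY Y \<Longrightarrow> \<exists>M\<ge>0. \<forall>n\<ge>1. goodop (Y n) M (X n)"
proof (induction rule: SY.induct)
  case (gen A)
  have A: "bounded_op A" using BDO_bop[OF gen] .
  obtain K where K: "K \<ge> 0" "\<forall>u\<in>L2. l2norm (A u) \<le> K * l2norm u" using bop_bound[OF A] by blast
  show ?case using gen_goodop[OF A K] K by blast
next
  case (plus X Z)
  then obtain M1 M2 where "M1 \<ge> 0" "\<forall>n\<ge>1. goodop (Y n) M1 (X n)" "M2 \<ge> 0" "\<forall>n\<ge>1. goodop (Y n) M2 (Z n)" by blast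
  then show ?case using Yf by (intro exI[of _ "M1+M2"]) (auto intro!: plus_goodop)
next
  case (scale X c)
  then obtain M1 where "M1 \<ge> 0" "\<forall>n\<ge>1. goodop (Y n) M1 (X n)" by blast
  then show ?case using Yf by (intro exI[of _ "cmod c * M1"]) (auto intro!: scale_goodop)
next
  case (comp X Z)
  then obtain M1 M2 where "M1 \<ge> 0" "\<forall>n\<ge>1. goodop (Y n) M1 (X n)" "M2 \<ge> 0" "\<forall>n\<ge>1. goodop (Y n) M2 (Z n)" by blast
  then have "goodop (Y n) (M1*M2) (\<lambda>a. X n (Z n a))" if "n \<ge> 1" for n
    using Yf that comp_goodop[of "Y n" M1 "X n" M2 "Z n"] by (simp add: comp_def)
  then show ?case using \<open>M1 \<ge> 0\<close> \<open>M2 \<ge> 0\<close> by (intro exI[of _ "M1*M2"]) auto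
next
  case (adj X)
  then obtain M1 where "M1 \<ge> 0" "\<forall>n\<ge>1. goodop (Y n) M1 (X n)" by blast
  then show ?case using Yf by (intro exI[of _ M1]) (auto intro!: adj_goodop)
next
  case (lim Xs X)
  then show ?case using FY_goodop by blast
qed




definition reg :: "(nat \<Rightarrow> 'g::group_add set) \<Rightarrow> (nat \<Rightarrow> 'g) \<Rightarrow> nat \<Rightarrow> 'g set" where
  "reg Y v n = {t. t + v n \<in> Y n}"

definition blk :: "(nat \<Rightarrow> 'g::group_add set) \<Rightarrow> (nat \<Rightarrow> 'g) \<Rightarrow> (nat \<Rightarrow> 'g op) \<Rightarrow> nat \<Rightarrow> 'g op" where
  "blk Y v A n x = Rsh (v n) (A n (proj (Y n) (Rsh (- v n) x)))"

lemma Rsh_Rsh: "Rsh a (Rsh b u) = Rsh (a + b) u"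
  by (simp add: Rsh_def add.assoc)

lemma Rsh_zero_fun[simp]: "Rsh a (\<lambda>t. 0) = (\<lambda>t. 0)"
  by (simp add: Rsh_def)

lemma reg_image: "reg Y v n = (\<lambda>t. t + - v n) ` Y n"
proof
  show "reg Y v n \<subseteq> (\<lambda>t. t + - v n) ` Y n"
  proof
    fix t assume "t \<in> reg Y v n"
    then have "t + v n \<in> Y n" by (simp add: reg_def)
    moreover have "t = (t + v n) + - v n" by (simp add: add.assoc)
    ultimately show "t \<in> (\<lambda>t. t + - v n) ` Y n" by blast
  qed
  show "(\<lambda>t. t + - v n) ` Y n \<subseteq> reg Y v n" by (auto simp: reg_def add.assoc)
qed

locale setting =
  fixes Y :: "nat \<Rightarrow> 'g::group_add set" and v :: "nat \<Rightarrow> 'g" and A :: "nat \<Rightarrow> 'g op" and M :: real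
  assumes Yf: "\<And>n. n \<ge> 1 \<Longrightarrow> finite (Y n)"
    and disj: "\<And>m n. m \<ge> 1 \<Longrightarrow> n \<ge> 1 \<Longrightarrow> m \<noteq> n \<Longrightarrow> reg Y v m \<inter> reg Y v n = {}"
    and gA: "\<And>n. n \<ge> 1 \<Longrightarrow> goodop (Y n) M (A n)"
    and M0: "0 \<le> M"
begin

abbreviation "R \<equiv> reg Y v"
abbreviation "B \<equiv> blk Y v A"

lemma finite_reg: "n \<ge> 1 \<Longrightarrow> finite (R n)"
  unfolding reg_image using Yf by simp

lemma inner_L2: "n \<ge> 1 \<Longrightarrow> proj (Y n) x \<in> L2"
  by (rule fin_supp_L2(1)[OF Yf]) (auto simp: proj_def)

lemma blk_supp: "n \<ge> 1 \<Longrightarrow> t \<notin> R n \<Longrightarrow> B n x t = 0"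
  using gA inner_L2 unfolding blk_def goodop_def reg_def Rsh_def by blast

lemma blk_local:
  assumes n: "n \<ge> 1" and eq: "\<And>s. s \<in> R n \<Longrightarrow> x s = x' s"
  shows "B n x = B n x'"
proof -
  have "proj (Y n) (Rsh (- v n) x) = proj (Y n) (Rsh (- v n) x')"
  proof
    fix s
    show "proj (Y n) (Rsh (- v n) x) s = proj (Y n) (Rsh (- v n) x') s"
    proof (cases "s \<in> Y n")
      case True
      then have "s + - v n \<in> R n" by (simp add: reg_def add.assoc)
      then show ?thesis using eq True by (simp add: proj_def Rsh_def)
    qed (simp add: proj_def)
  qed
  then show ?thesis by (simp add: blk_def)
qed

lemma blk_zero:
  assumes n: "n \<ge> 1" and z: "\<And>s. s \<in> R n \<Longrightarrow> x s = 0"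
  shows "B n x = (\<lambda>t. 0)"
proof -
  have "B n x = B n (\<lambda>t. 0)" by (rule blk_local[OF n]) (use z in auto)
  also have "\<dots> = (\<lambda>t. 0)"
  proof -
    have "proj (Y n) (Rsh (- v n) (\<lambda>t. 0)) = (\<lambda>t. 0)" by (simp add: proj_def)
    moreover have "A n (\<lambda>t. 0) = (\<lambda>t. 0)" using lin_zero[of "A n"] gA[OF n] by (simp add: goodop_def)
    ultimately show ?thesis by (simp add: blk_def)
  qed
  finally show ?thesis .
qed

lemma OpA_def': "OpA Y v A x t = (\<Sum>m. if m \<ge> 1 then B m x t else 0)"
  by (simp only: OpA_def blk_def)

lemma OpA_at:
  assumes n: "n \<ge> 1" and t: "t \<in> R n"
  shows "OpA Y v A x t = B n x t"
proof -
  have "(\<Sum>m. if m \<ge> 1 then B m x t else 0) = (\<Sum>m\<in>{n}. if m \<ge> 1 then B m x t else 0)"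
  proof (rule suminf_finite)
    fix m assume "m \<notin> {n}"
    then have "m \<noteq> n" by simp
    show "(if m \<ge> 1 then B m x t else 0) = 0"
    proof (cases "m \<ge> 1")
      case True
      then have "t \<notin> R m" using disj[OF True n \<open>m \<noteq> n\<close>] t by blast
      then show ?thesis using blk_supp[OF True] True by simp
    qed simp
  qed simp
  then show ?thesis using n by (simp add: OpA_def')
qed

lemma OpA_out:
  assumes "\<And>n. n \<ge> 1 \<Longrightarrow> t \<notin> R n"
  shows "OpA Y v A x t = 0"
proof -
  have "(\<Sum>m. if m \<ge> 1 then B m x t else 0) = (\<Sum>m\<in>{}. if m \<ge> 1 then B m x t else 0)"
    by (rule suminf_finite) (use assms blk_supp in auto)
  then show ?thesis by (simp add: OpA_def')
qed

lemma blk_norm: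
  assumes n: "n \<ge> 1"
  shows "L2s (B n x) (R n) \<le> M * L2s x (R n)"
proof -
  define z where "z = proj (Y n) (Rsh (- v n) x)"
  have zL: "z \<in> L2" unfolding z_def by (rule inner_L2[OF n])
  have nz: "l2norm z = L2s z (Y n)" by (rule fin_supp_L2(2)[OF Yf[OF n]]) (auto simp: z_def proj_def)
  have "L2s z (Y n) = L2s (Rsh (- v n) x) (Y n)" by (rule L2_set_cong) (auto simp: z_def proj_def)
  also have "\<dots> = L2s x (R n)" by (simp add: L2s_reindex reg_image)
  finally have nz': "l2norm z = L2s x (R n)" using nz by simp
  have AzL: "A n z \<in> L2" using goodop_L2[OF Yf[OF n] gA[OF n] zL] .
  have "L2s (B n x) (R n) \<le> l2norm (B n x)"
    by (rule l2_fin_le[OF _ finite_reg[OF n]]) (use l2_Rsh[OF AzL] in \<open>simp add: blk_def z_def\<close>)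
  also have "\<dots> = l2norm (A n z)" using l2_Rsh_eq[OF AzL] by (simp add: blk_def z_def)
  also have "\<dots> \<le> M * l2norm z" using gA[OF n] zL by (simp add: goodop_def)
  finally show ?thesis using nz' by simp
qed

lemma finite_hits:
  assumes F: "finite F"
  shows "finite {n. n \<ge> 1 \<and> R n \<inter> F \<noteq> {}}"
proof -
  have sub: "{n. n \<ge> 1 \<and> R n \<inter> F \<noteq> {}} \<subseteq> (\<Union>t\<in>F. {n. n \<ge> 1 \<and> t \<in> R n})" by blast
  have fin: "finite {n. n \<ge> 1 \<and> t \<in> R n}" for t
  proof (cases "\<exists>n. n \<ge> 1 \<and> t \<in> R n")
    case True
    then obtain n0 where n0: "n0 \<ge> 1" "t \<in> R n0" by blast
    have "{n. n \<ge> 1 \<and> t \<in> R n} \<subseteq> {n0}" using disj n0 by blast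
    then show ?thesis using finite_subset by blast
  next
    case False
    then have "{n. n \<ge> 1 \<and> t \<in> R n} = {}" by auto
    then show ?thesis by (metis finite.emptyI)
  qed
  show ?thesis by (rule finite_subset[OF sub]) (use F fin in blast)
qed

lemma OpA_bound:
  assumes x: "x \<in> L2"
  shows "OpA Y v A x \<in> L2 \<and> l2norm (OpA Y v A x) \<le> M * l2norm x"
proof (rule l2_from_fin)
  show "0 \<le> M * l2norm x" using M0 by (simp add: l2norm_nonneg)
  fix F :: "'g set" assume F: "finite F"
  define N where "N = {n. n \<ge> 1 \<and> R n \<inter> F \<noteq> {}}"
  have N: "finite N" unfolding N_def by (rule finite_hits[OF F])
  have N1: "n \<in> N \<Longrightarrow> n \<ge> 1" for n by (simp add: N_def)
  have djN: "\<forall>i\<in>N. \<forall>j\<in>N. i \<noteq> j \<longrightarrow> R i \<inter> R j = {}" using disj N1 by blast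
  have djN': "\<forall>i\<in>N. \<forall>j\<in>N. i \<noteq> j \<longrightarrow> (F \<inter> R i) \<inter> (F \<inter> R j) = {}" using djN by blast
  let ?f = "\<lambda>t. (cmod (OpA Y v A x t))^2"
  have "(\<Sum>t\<in>F. ?f t) = (\<Sum>t\<in>(\<Union>n\<in>N. F \<inter> R n). ?f t)"
  proof (rule sum.mono_neutral_right[OF F])
    show "(\<Union>n\<in>N. F \<inter> R n) \<subseteq> F" by blast
    show "\<forall>t\<in>F - (\<Union>n\<in>N. F \<inter> R n). ?f t = 0"
    proof
      fix t assume t: "t \<in> F - (\<Union>n\<in>N. F \<inter> R n)"
      have "t \<notin> R n" if "n \<ge> 1" for n using t that by (auto simp: N_def)
      then show "?f t = 0" using OpA_out by simp
    qed
  qed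
  also have "\<dots> = (\<Sum>n\<in>N. \<Sum>t\<in>F \<inter> R n. ?f t)"
    by (rule sum.UNION_disjoint[OF N]) (use F djN' in auto)
  also have "\<dots> = (\<Sum>n\<in>N. \<Sum>t\<in>F \<inter> R n. (cmod (B n x t))^2)"
  proof (rule sum.cong[OF refl], rule sum.cong[OF refl])
    fix n t assume "n \<in> N" "t \<in> F \<inter> R n"
    then show "?f t = (cmod (B n x t))^2" using OpA_at[OF N1[of n], of t x] by simp
  qed
  also have "\<dots> \<le> (\<Sum>n\<in>N. \<Sum>t\<in>R n. (cmod (B n x t))^2)"
    by (rule sum_mono, rule sum_mono2) (use finite_reg N1 in auto)
  also have "\<dots> = (\<Sum>n\<in>N. (L2s (B n x) (R n))^2)" by (simp add: L2_set_sq)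
  also have "\<dots> \<le> (\<Sum>n\<in>N. (M * L2s x (R n))^2)"
    by (rule sum_mono, rule power_mono) (use blk_norm N1 in auto)
  also have "\<dots> = M^2 * (\<Sum>n\<in>N. \<Sum>t\<in>R n. (cmod (x t))^2)"
    by (simp add: power_mult_distrib L2_set_sq sum_distrib_left)
  also have "(\<Sum>n\<in>N. \<Sum>t\<in>R n. (cmod (x t))^2) = (\<Sum>t\<in>(\<Union>n\<in>N. R n). (cmod (x t))^2)"
    by (rule sum.UNION_disjoint[OF N, symmetric]) (use djN finite_reg N1 in auto)
  also have "\<dots> = (L2s x (\<Union>n\<in>N. R n))^2" by (simp add: L2_set_sq)
  also have "\<dots> \<le> (l2norm x)^2"
    by (rule power_mono[OF l2_fin_le[OF x]]) (use N finite_reg N1 in auto)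
  finally have "(L2s (OpA Y v A x) F)^2 \<le> (M * l2norm x)^2"
    using M0 by (simp add: L2_set_sq power_mult_distrib mult_left_mono)
  then show "L2s (OpA Y v A x) F \<le> M * l2norm x"
    by (rule power2_le_imp_le) (use M0 l2norm_nonneg[of x] in simp)
qed

definition H :: "nat \<Rightarrow> 'g set" where "H k = (\<Union>n\<in>{n. n \<ge> 1 \<and> n \<noteq> k}. R n)"

lemma OpA_minus_blk:
  assumes k: "k \<ge> 1"
  shows "OpA Y v A x p - B k x p = OpA Y v A (proj (H k) x) p"
proof (cases "p \<in> R k")
  case True
  have "B k (proj (H k) x) = (\<lambda>t. 0)"
  proof (rule blk_zero[OF k])
    fix s assume s: "s \<in> R k"
    then have "s \<notin> H k" using disj k by (auto simp: H_def)
    then show "proj (H k) x s = 0" by (simp add: proj_def)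
  qed
  then show ?thesis using OpA_at[OF k True] by simp
next
  case False
  have b0: "B k x p = 0" using blk_supp[OF k False] .
  show ?thesis
  proof (cases "\<exists>n. n \<ge> 1 \<and> p \<in> R n")
    case True
    then obtain n where n: "n \<ge> 1" "p \<in> R n" by blast
    have "n \<noteq> k" using n False by blast
    then have sub: "R n \<subseteq> H k" using n by (auto simp: H_def)
    have "B n (proj (H k) x) = B n x"
      by (rule blk_local[OF n(1)]) (use sub in \<open>auto simp: proj_def\<close>)
    then show ?thesis using OpA_at[OF n] b0 by simp
  next
    case False
    then show ?thesis using OpA_out b0 by auto
  qed
qed

lemma conj_decomp:
  assumes k: "k \<ge> 1" and g: "g = v k + \<eta> + w"
  shows "(\<lambda>t. (Rsh (- g) \<circ> OpA Y v A \<circ> Rsh g) u t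
            - (Rsh (- w) \<circ> Rsh (- \<eta>) \<circ> A k \<circ> proj (Y k) \<circ> Rsh \<eta> \<circ> Rsh w) u t)
         = Rsh (- g) (OpA Y v A (proj (H k) (Rsh g u)))"
proof
  fix t
  have e1: "Rsh (- v k) (Rsh g u) = Rsh \<eta> (Rsh w u)"
    by (simp add: Rsh_Rsh g add.assoc[symmetric])
  have e2: "t + - g + v k = t + - w + - \<eta>"
    unfolding g by (simp only: minus_add add.assoc minus_add_cancel add.right_neutral left_minus)
  have "(Rsh (- w) \<circ> Rsh (- \<eta>) \<circ> A k \<circ> proj (Y k) \<circ> Rsh \<eta> \<circ> Rsh w) u t = B k (Rsh g u) (t + - g)"
    by (simp only: blk_def o_apply e1) (simp only: Rsh_def e2)
  moreover have "(Rsh (- g) \<circ> OpA Y v A \<circ> Rsh g) u t = OpA Y v A (Rsh g u) (t + - g)"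
    by (simp add: Rsh_def)
  ultimately show "(Rsh (- g) \<circ> OpA Y v A \<circ> Rsh g) u t
            - (Rsh (- w) \<circ> Rsh (- \<eta>) \<circ> A k \<circ> proj (Y k) \<circ> Rsh \<eta> \<circ> Rsh w) u t
         = Rsh (- g) (OpA Y v A (proj (H k) (Rsh g u))) t"
    using OpA_minus_blk[OF k, of "Rsh g u" "t + - g"] by (simp add: Rsh_def)
qed

lemma conj_decomp_bound:
  assumes k: "k \<ge> 1" and g: "g = v k + \<eta> + w" and u: "u \<in> L2"
  defines "D \<equiv> (\<lambda>t. (Rsh (- g) \<circ> OpA Y v A \<circ> Rsh g) u t
            - (Rsh (- w) \<circ> Rsh (- \<eta>) \<circ> A k \<circ> proj (Y k) \<circ> Rsh \<eta> \<circ> Rsh w) u t)"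
  shows "D \<in> L2 \<and> l2norm D \<le> M * l2norm (proj {s. s + - g \<in> H k} u)"
proof -
  let ?G = "{s. s + - g \<in> H k}"
  have pe: "proj (H k) (Rsh g u) = Rsh g (proj ?G u)"
    by (auto simp: proj_def Rsh_def add.assoc)
  have pL: "proj ?G u \<in> L2" using l2_proj[OF u] by blast
  have rL: "Rsh g (proj ?G u) \<in> L2" using l2_Rsh[OF pL] by blast
  have ob: "OpA Y v A (Rsh g (proj ?G u)) \<in> L2 \<and> l2norm (OpA Y v A (Rsh g (proj ?G u))) \<le> M * l2norm (Rsh g (proj ?G u))"
    by (rule OpA_bound[OF rL])
  have D: "D = Rsh (- g) (OpA Y v A (Rsh g (proj ?G u)))"
    unfolding D_def conj_decomp[OF k g] pe ..
  show ?thesis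
    using ob l2_Rsh[of _ "- g"] l2_Rsh_eq[of _ "- g"] l2_Rsh_eq[OF pL, of g] unfolding D by auto
qed

end

lemma proj_conj:
  fixes g :: "'g::group_add"
  shows "(Rsh (- g) \<circ> proj X \<circ> Rsh g) u = proj {t. t + - g \<in> X} u"
  by (auto simp: Rsh_def proj_def add.assoc)

lemma adj_proj:
  assumes v: "v \<in> L2" shows "adj (proj X) v = proj X v"
proof -
  have sym: "l2inner (proj X a) b = l2inner a (proj X b)" for a b
    unfolding l2inner_def proj_def by (rule arg_cong[where f="\<lambda>f. infsum f UNIV"]) auto
  have PC: "(\<forall>v\<in>L2. adj (proj X) v \<in> L2) \<and> (\<forall>u\<in>L2. \<forall>v\<in>L2. l2inner (proj X u) v = l2inner u (adj (proj X) v))"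
    unfolding adj_def by (rule someI[where x="proj X"]) (use l2_proj sym in auto)
  show ?thesis
  proof
    fix s
    have "cnj (adj (proj X) v s) = l2inner (dl s) (adj (proj X) v)" by (simp add: l2inner_dl)
    also have "\<dots> = l2inner (proj X (dl s)) v" using PC v by simp
    also have "\<dots> = l2inner (dl s) (proj X v)" by (rule sym)
    also have "\<dots> = cnj (proj X v s)" by (simp add: l2inner_dl)
    finally show "adj (proj X) v s = proj X v s" by simp
  qed
qed




lemma bool_subseq:
  fixes P :: "nat \<Rightarrow> 'g::countable \<Rightarrow> bool"
  shows "\<exists>r E. strict_mono r \<and> (\<forall>t. \<forall>\<^sub>F j in sequentially. P (r j) t = (t \<in> E))"
proof -
  define f where "f n = (\<lambda>t. if P n t then 1 else (0::real))" for n
  have cpt: "compact (PiE UNIV (\<lambda>_::'g. {0..1::real}))"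
    using compactin_PiE[of "\<lambda>_. euclideanreal" UNIV "\<lambda>_. {0..1::real}"]
    by (simp add: euclidean_product_topology)
  then have "seq_compact (PiE UNIV (\<lambda>_::'g. {0..1::real}))"
    by (rule compact_imp_seq_compact)
  moreover have "\<forall>n. f n \<in> PiE UNIV (\<lambda>_::'g. {0..1::real})" by (auto simp: f_def)
  ultimately obtain l r where r: "strict_mono r" and lim: "(f \<circ> r) \<longlonglongrightarrow> l"
    unfolding seq_compact_def by metis
  have pt: "(\<lambda>j. f (r j) t) \<longlonglongrightarrow> l t" for t
  proof -
    have "continuous_on UNIV (\<lambda>x::'g\<Rightarrow>real. x t)" by simp
    then have "((\<lambda>x::'g\<Rightarrow>real. x t) \<circ> (f \<circ> r)) \<longlonglongrightarrow> l t"
      using lim continuous_on_tendsto_compose[of UNIV "\<lambda>x::'g\<Rightarrow>real. x t" "f \<circ> r" l sequentially]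
      by (simp add: o_def)
    then show ?thesis by (simp add: o_def)
  qed
  define E where "E = {t. l t > 1/2}"
  have "\<forall>\<^sub>F j in sequentially. P (r j) t = (t \<in> E)" for t
  proof -
    have hh: "\<forall>e>0. \<forall>\<^sub>F j in sequentially. dist (f (r j) t) (l t) < e"
      using pt[of t] by (simp only: tendsto_iff)
    have "\<forall>\<^sub>F j in sequentially. dist (f (r j) t) (l t) < 1/2"
      using spec[OF hh, of "1/2"] by simp
    then show ?thesis
    proof (rule eventually_mono)
      fix j assume "dist (f (r j) t) (l t) < 1/2"
      then have d'': "\<bar>f (r j) t - l t\<bar> < 1/2" by (simp add: dist_real_def)
      then have d': "- (1/2) < f (r j) t - l t \<and> f (r j) t - l t < 1/2" by (simp only: abs_less_iff) auto
      show "P (r j) t = (t \<in> E)"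
      proof (cases "P (r j) t")
        case True
        then have "f (r j) t = 1" by (simp add: f_def)
        with d' have "l t > 1/2" by linarith
        then show ?thesis using True by (simp add: E_def)
      next
        case False
        then have "f (r j) t = 0" by (simp add: f_def)
        with d' have "l t < 1/2" by linarith
        then show ?thesis using False by (simp add: E_def)
      qed
    qed
  qed
  with r show ?thesis by blast
qed

lemma comb_seq:
  fixes h :: "nat \<Rightarrow> 'g::group_add" and Q :: "nat \<Rightarrow> 'g set"
  assumes fin: "\<And>k. k \<ge> 1 \<Longrightarrow> finite (Q k)"
    and inf: "tends_to_inf h"
    and hb: "infinite {n. \<exists>k\<ge>1. \<exists>\<eta>\<in>Q k. \<exists>w\<in>W. h n = v k + \<eta> + w}" and W: "finite W"
  shows "\<exists>(nj::nat\<Rightarrow>nat) (kj::nat\<Rightarrow>nat) \<eta> w. strict_mono nj \<and> (\<forall>j. nj j \<ge> 1) \<and> strict_mono kj \<and> (\<forall>j. kj j \<ge> 1)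
           \<and> (\<forall>j. \<eta> j \<in> Q (kj j)) \<and> (\<forall>j. h (nj j) = v (kj j) + \<eta> j + w)"
proof -
  define N1 where "N1 w = {n. \<exists>k\<ge>1. \<exists>\<eta>\<in>Q k. h n = v k + \<eta> + w}" for w
  have "\<exists>w\<in>W. infinite (N1 w)"
  proof (rule ccontr)
    assume "\<not> (\<exists>w\<in>W. infinite (N1 w))"
    then have "finite (\<Union>w\<in>W. N1 w)" using W by auto
    moreover have "{n. \<exists>k\<ge>1. \<exists>\<eta>\<in>Q k. \<exists>w\<in>W. h n = v k + \<eta> + w} \<subseteq> (\<Union>w\<in>W. N1 w)"
      by (auto simp: N1_def)
    ultimately show False using hb finite_subset by blast
  qed
  then obtain w where infw: "infinite (N1 w)" by blast
  have unb: "\<exists>n>N. \<exists>k>K. \<exists>\<eta>\<in>Q k. h n = v k + \<eta> + w" for N K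
  proof -
    define Bs where "Bs = (\<Union>k\<in>{1..K}. (\<lambda>\<eta>. v k + \<eta> + w) ` Q k)"
    have "finite Bs" unfolding Bs_def using fin by auto
    then have "\<forall>\<^sub>F n in sequentially. h n \<notin> Bs" using inf by (simp add: tends_to_inf_def)
    then obtain N' where N': "\<And>n. n \<ge> N' \<Longrightarrow> h n \<notin> Bs" unfolding eventually_sequentially by blast
    obtain n where n: "n > max N N'" "n \<in> N1 w" using infw unfolding infinite_nat_iff_unbounded by blast
    then obtain k \<eta> where k: "k \<ge> 1" "\<eta> \<in> Q k" "h n = v k + \<eta> + w" by (auto simp: N1_def)
    have "k > K"
    proof (rule ccontr)
      assume "\<not> k > K"
      then have "h n \<in> Bs" using k unfolding Bs_def by auto
      then show False using N'[of n] n by simp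
    qed
    then show ?thesis using n k by auto
  qed
  define Qp where "Qp N K t \<longleftrightarrow> fst t > N \<and> fst (snd t) > K \<and> snd (snd t) \<in> Q (fst (snd t))
        \<and> h (fst t) = v (fst (snd t)) + snd (snd t) + w" for N K and t :: "nat \<times> nat \<times> 'g"
  have ex: "\<exists>t. Qp N K t" for N K
  proof -
    obtain n k \<eta> where "n > N" "k > K" "\<eta> \<in> Q k" "h n = v k + \<eta> + w" using unb[of N K] by blast
    then show ?thesis by (intro exI[of _ "(n, k, \<eta>)"]) (simp add: Qp_def)
  qed
  define nxt where "nxt N K = (SOME t. Qp N K t)" for N K
  have Qn: "Qp N K (nxt N K)" for N K unfolding nxt_def by (rule someI_ex[OF ex])
  define sq where "sq = rec_nat (nxt 0 0) (\<lambda>j p. nxt (fst p) (fst (snd p)))"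
  have sq0: "sq 0 = nxt 0 0" and sqS: "sq (Suc j) = nxt (fst (sq j)) (fst (snd (sq j)))" for j
    by (simp_all add: sq_def)
  define nj where "nj j = fst (sq j)" for j
  define kj where "kj j = fst (snd (sq j))" for j
  define et where "et j = snd (snd (sq j))" for j
  have qS: "Qp (nj j) (kj j) (sq (Suc j))" for j using Qn by (simp add: sqS nj_def kj_def)
  have qa: "\<exists>N K. Qp N K (sq j)" for j
  proof (cases j)
    case 0 then show ?thesis using Qn sq0 by metis
  next
    case (Suc i) then show ?thesis using qS by blast
  qed
  have a: "strict_mono nj" unfolding strict_mono_Suc_iff using qS by (simp add: Qp_def nj_def)
  have b: "strict_mono kj" unfolding strict_mono_Suc_iff using qS by (simp add: Qp_def kj_def)
  have c: "\<forall>j. nj j \<ge> 1 \<and> kj j \<ge> 1 \<and> et j \<in> Q (kj j) \<and> h (nj j) = v (kj j) + et j + w"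
  proof
    fix j
    obtain N K where q: "Qp N K (sq j)" using qa by blast
    then show "nj j \<ge> 1 \<and> kj j \<ge> 1 \<and> et j \<in> Q (kj j) \<and> h (nj j) = v (kj j) + et j + w"
      by (auto simp: Qp_def nj_def kj_def et_def)
  qed
  show ?thesis using a b c by blast
qed




theorem mainTheorem7:
  fixes \<Omega> :: "('g::{group_add,countable}) set"
    and Y :: "nat \<Rightarrow> 'g set" and v :: "nat \<Rightarrow> 'g"
    and A :: "nat \<Rightarrow> 'g op" and h :: "nat \<Rightarrow> 'g" and Bh :: "'g op" and r :: nat
  assumes Om_fin: "finite \<Omega>" and Om_e: "0 \<in> \<Omega>"
    and Om_gen: "\<forall>g. \<exists>xs. set xs \<subseteq> \<Omega> \<and> sum_list xs = g"
    and Y_fin: "\<forall>n\<ge>1. finite (Y n)"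
    and Y_inc: "\<forall>n\<ge>1. Y n \<subseteq> Y (Suc n)"
    and Y_union: "(\<Union>n\<in>{1..}. Y n) = UNIV"
    and v_infl: "\<forall>m\<ge>1. \<forall>n\<ge>1. m \<noteq> n \<longrightarrow>
                   setmul (Zset \<Omega> Y m) {- v m} \<inter> setmul (Zset \<Omega> Y n) {- v n} = {}"
    and A_in: "A \<in> SY Y"
    and h_inf: "tends_to_inf h"
    and h_lim: "limop (op_plus (OpA Y v A) (proj (Gamma' Y v))) h Bh"
    and h_bd: "infinite {n. \<exists>k\<ge>1. h n \<in> setmul (setmul {v k} (setinv (bd_Om \<Omega> (Y k)))) (OmegaN \<Omega> r)}"
  shows "\<exists>nj kj \<eta> w S Lg.
           strict_mono nj \<and> (\<forall>j. nj j \<ge> 1) \<and>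
           strict_mono kj \<and> (\<forall>j. kj j \<ge> 1) \<and>
           (\<forall>j. \<eta> j \<in> setinv (bd_Om \<Omega> (Y (kj j)))) \<and>
           (\<forall>j. h (nj j) = v (kj j) + \<eta> j + w) \<and>
           limop (proj (Gamma' Y v)) (\<lambda>j. h (nj j)) Lg \<and>
           strong_lim (\<lambda>j. Rsh (- w) \<circ> Rsh (- \<eta> j) \<circ> A (kj j) \<circ> proj (Y (kj j))
                            \<circ> Rsh (\<eta> j) \<circ> Rsh w) S \<and>
           (\<forall>u\<in>L2. Bh u = (\<lambda>t. S u t + Lg u t))"
proof -
  have Yf: "\<And>n. n \<ge> 1 \<Longrightarrow> finite (Y n)" using Y_fin by auto
  have zeroO: "0 \<in> OmegaN \<Omega> n" for n
    unfolding OmegaN_def by (rule CollectI, rule exI[of _ "[]"]) auto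
  have smI: "a + b \<in> setmul X Z" if "a \<in> X" "b \<in> Z" for a b X Z
    unfolding setmul_def using that by blast
  have YZ: "Y n \<subseteq> Zset \<Omega> Y n" for n
  proof
    fix y assume y: "y \<in> Y n"
    let ?W = "Y n \<union> OmegaN \<Omega> n"
    have m0: "- 0 \<in> setinv ?W" unfolding setinv_def using zeroO by blast
    have "y + - 0 + 0 \<in> setmul (setmul ?W (setinv ?W)) ?W"
      by (intro smI m0) (use y zeroO in auto)
    then show "y \<in> Zset \<Omega> Y n" by (simp add: Zset_def Let_def)
  qed
  have inZ: "x \<in> setmul (Zset \<Omega> Y n) {- v n}" if "x \<in> reg Y v n" for x n
  proof -
    have "x + v n + - v n \<in> setmul (Zset \<Omega> Y n) {- v n}"
      by (rule smI) (use that YZ in \<open>auto simp: reg_def\<close>)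
    then show ?thesis by (simp add: add.assoc)
  qed
  have disj: "reg Y v m \<inter> reg Y v n = {}" if "m \<ge> 1" "n \<ge> 1" "m \<noteq> n" for m n
    using v_infl that inZ by blast
  obtain M where M: "M \<ge> 0" "\<forall>n\<ge>1. goodop (Y n) M (A n)"
    using SY_good[OF _ A_in] Y_fin by blast
  interpret S: setting Y v A M
    by unfold_locales (use Yf disj M in auto)
  define Q where "Q k = setinv (bd_Om \<Omega> (Y k))" for k
  have finQ: "finite (Q k)" if "k \<ge> 1" for k
  proof -
    have "bd_Om \<Omega> (Y k) \<subseteq> Y k" by (auto simp: bd_Om_def)
    then have "finite (bd_Om \<Omega> (Y k))" using Yf[OF that] finite_subset by blast
    then show ?thesis by (simp add: Q_def setinv_def)
  qed
  have finW: "finite (OmegaN \<Omega> r)"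
  proof -
    have "OmegaN \<Omega> r = sum_list ` {xs. set xs \<subseteq> \<Omega> \<and> length xs \<le> r}"
      unfolding OmegaN_def by blast
    then show ?thesis using finite_lists_length_le[OF Om_fin] by simp
  qed
  have seteq: "{n. \<exists>k\<ge>1. h n \<in> setmul (setmul {v k} (setinv (bd_Om \<Omega> (Y k)))) (OmegaN \<Omega> r)}
      = {n. \<exists>k\<ge>1. \<exists>\<eta>\<in>Q k. \<exists>w\<in>OmegaN \<Omega> r. h n = v k + \<eta> + w}"
    unfolding setmul_def Q_def by blast
  have hb: "infinite {n. \<exists>k\<ge>1. \<exists>\<eta>\<in>Q k. \<exists>w\<in>OmegaN \<Omega> r. h n = v k + \<eta> + w}"
    using h_bd seteq by simp
  obtain nj kj \<eta> w where nj: "strict_mono (nj::nat\<Rightarrow>nat)" "\<forall>j. nj j \<ge> 1"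
    and kj: "strict_mono (kj::nat\<Rightarrow>nat)" "\<forall>j. kj j \<ge> 1"
    and et: "\<forall>j. \<eta> j \<in> Q (kj j)" and hj: "\<forall>j. h (nj j) = v (kj j) + \<eta> j + w"
    using comb_seq[OF finQ h_inf hb finW] by blast
  obtain r E where r: "strict_mono r"
    and rE: "\<forall>t. \<forall>\<^sub>F j in sequentially. (t + - h (nj (r j)) \<in> Gamma' Y v) = (t \<in> E)"
    using bool_subseq[of "\<lambda>j t. t + - h (nj j) \<in> Gamma' Y v"] by blast
  define g where "g j = h (nj (r j))" for j
  define S where "S u = (\<lambda>t. Bh u t - proj E u t)" for u
  define G where "G j = {s. s + - g j \<in> S.H (kj (r j))}" for j
  have nr: "strict_mono (\<lambda>j. nj (r j))" using strict_mono_o[OF nj(1) r] by (simp add: o_def)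
  have kr: "strict_mono (\<lambda>j. kj (r j))" using strict_mono_o[OF kj(1) r] by (simp add: o_def)
  have gj: "g j = v (kj (r j)) + \<eta> (r j) + w" for j using hj by (simp add: g_def)
  have Pconv: "(\<lambda>j. l2norm (\<lambda>t. proj {s. s + - g j \<in> Gamma' Y v} u t - proj E u t)) \<longlonglongrightarrow> 0"
    if u: "u \<in> L2" for u
  proof (rule l2_dom_conv[OF u])
    fix j t
    show "cmod (proj {s. s + - g j \<in> Gamma' Y v} u t - proj E u t) \<le> cmod (u t)"
      by (auto simp: proj_def)
  next
    fix t
    show "\<forall>\<^sub>F j in sequentially. proj {s. s + - g j \<in> Gamma' Y v} u t - proj E u t = 0"
      using rE[rule_format, of t] by (rule eventually_mono) (auto simp: proj_def g_def)
  qed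
  have Zarg: "\<forall>\<^sub>F j in sequentially. t \<notin> G j" for t
  proof -
    obtain xs where xs: "set xs \<subseteq> \<Omega>" "sum_list xs = t + - w" using Om_gen by blast
    have "\<forall>\<^sub>F j in sequentially. j \<ge> length xs" by (rule eventually_ge_at_top)
    then show ?thesis
    proof (rule eventually_mono)
      fix j assume jL: "j \<ge> length xs"
      define K where "K = kj (r j)"
      have K1: "K \<ge> 1" using kj by (simp add: K_def)
      have "j \<le> K" unfolding K_def using seq_suble[OF kr] by simp
      then have tw: "t + - w \<in> OmegaN \<Omega> K" unfolding OmegaN_def
        using xs jL by (auto intro!: exI[of _ xs])
      obtain b where b: "b \<in> bd_Om \<Omega> (Y K)" "\<eta> (r j) = - b"
        using et unfolding Q_def setinv_def K_def by blast
      have bY: "b \<in> Y K" using b(1) by (simp add: bd_Om_def)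
      show "t \<notin> G j"
      proof
        assume "t \<in> G j"
        then obtain n where n: "n \<ge> 1" "n \<noteq> K" "t + - g j \<in> reg Y v n"
          unfolding G_def S.H_def K_def by blast
        have p1: "t + - g j \<in> setmul (Zset \<Omega> Y n) {- v n}" using inZ[OF n(3)] .
        let ?W = "Y K \<union> OmegaN \<Omega> K"
        have m0: "- 0 \<in> setinv ?W" unfolding setinv_def using zeroO by blast
        have "(t + - w) + - 0 + b \<in> Zset \<Omega> Y K"
          unfolding Zset_def Let_def by (intro smI m0) (use tw bY in auto)
        then have "((t + - w) + - 0 + b) + - v K \<in> setmul (Zset \<Omega> Y K) {- v K}"
          by (intro smI) auto
        moreover have "t + - g j = ((t + - w) + - 0 + b) + - v K"
          unfolding gj b(2) K_def
          by (simp only: minus_add minus_minus add.assoc minus_zero add.right_neutral)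
        ultimately have p2: "t + - g j \<in> setmul (Zset \<Omega> Y K) {- v K}" by simp
        show False using v_infl n(1,2) K1 p1 p2 by blast
      qed
    qed
  qed
  have Gconv: "(\<lambda>j. l2norm (proj (G j) u)) \<longlonglongrightarrow> 0" if u: "u \<in> L2" for u
  proof (rule l2_dom_conv[OF u])
    fix j t show "cmod (proj (G j) u t) \<le> cmod (u t)" by (simp add: proj_def)
  next
    fix t show "\<forall>\<^sub>F j in sequentially. proj (G j) u t = 0"
      using Zarg[of t] by (rule eventually_mono) (simp add: proj_def)
  qed
  have opl: "(Rsh (- a) \<circ> op_plus B1 B2 \<circ> Rsh a) u t
        = (Rsh (- a) \<circ> B1 \<circ> Rsh a) u t + (Rsh (- a) \<circ> B2 \<circ> Rsh a) u t" for a :: 'g and B1 B2 u t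
    by (simp add: op_plus_def Rsh_def)
  show ?thesis
  proof (rule exI[of _ "\<lambda>j. nj (r j)"], rule exI[of _ "\<lambda>j. kj (r j)"], rule exI[of _ "\<lambda>j. \<eta> (r j)"],
         rule exI[of _ w], rule exI[of _ S], rule exI[of _ "proj E"], intro conjI)
    show "strict_mono (\<lambda>j. nj (r j))" by (rule nr)
    show "strict_mono (\<lambda>j. kj (r j))" by (rule kr)
    show "\<forall>j. nj (r j) \<ge> 1" using nj by simp
    show "\<forall>j. kj (r j) \<ge> 1" using kj by simp
    show "\<forall>j. \<eta> (r j) \<in> setinv (bd_Om \<Omega> (Y (kj (r j))))" using et by (simp add: Q_def)
    show "\<forall>j. h (nj (r j)) = v (kj (r j)) + \<eta> (r j) + w" using hj by simp
    show "\<forall>u\<in>L2. Bh u = (\<lambda>t. S u t + proj E u t)" by (simp add: S_def)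
    have gfold: "(\<lambda>j. h (nj (r j))) = g" by (simp add: g_def fun_eq_iff)
    show "limop (proj (Gamma' Y v)) (\<lambda>j. h (nj (r j))) (proj E)"
      unfolding gfold limop_def strong_lim_def
    proof (intro conjI ballI)
      fix u :: "'g vec" assume u: "u \<in> L2"
      show "(\<lambda>m. l2norm (\<lambda>t. (Rsh (- g m) \<circ> proj (Gamma' Y v) \<circ> Rsh (g m)) u t - proj E u t)) \<longlonglongrightarrow> 0"
        unfolding proj_conj using Pconv[OF u] .
      have e1: "(Rsh (- g m) \<circ> adj (proj (Gamma' Y v)) \<circ> Rsh (g m)) u = (Rsh (- g m) \<circ> proj (Gamma' Y v) \<circ> Rsh (g m)) u" for m
        using adj_proj[of "Rsh (g m) u"] l2_Rsh[OF u] by simp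
      have e2: "adj (proj E) u = proj E u" using adj_proj[OF u] .
      show "(\<lambda>m. l2norm (\<lambda>t. (Rsh (- g m) \<circ> adj (proj (Gamma' Y v)) \<circ> Rsh (g m)) u t - adj (proj E) u t)) \<longlonglongrightarrow> 0"
        unfolding e1 e2 proj_conj using Pconv[OF u] .
    qed
    show "strong_lim (\<lambda>j. Rsh (- w) \<circ> Rsh (- \<eta> (r j)) \<circ> A (kj (r j)) \<circ> proj (Y (kj (r j)))
                            \<circ> Rsh (\<eta> (r j)) \<circ> Rsh w) S"
      unfolding strong_lim_def
    proof
      fix u :: "'g vec" assume u: "u \<in> L2"
      define X where "X j = Rsh (- w) \<circ> Rsh (- \<eta> (r j)) \<circ> A (kj (r j)) \<circ> proj (Y (kj (r j)))
                            \<circ> Rsh (\<eta> (r j)) \<circ> Rsh w" for j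
      define a where "a j = (\<lambda>t. (Rsh (- g j) \<circ> op_plus (OpA Y v A) (proj (Gamma' Y v)) \<circ> Rsh (g j)) u t - Bh u t)" for j
      define b where "b j = (\<lambda>t. proj {s. s + - g j \<in> Gamma' Y v} u t - proj E u t)" for j
      define c where "c j = (\<lambda>t. (Rsh (- g j) \<circ> OpA Y v A \<circ> Rsh (g j)) u t - X j u t)" for j
      have opl2: "(Rsh (- g j) \<circ> op_plus (OpA Y v A) (proj (Gamma' Y v)) \<circ> Rsh (g j)) u t
          = (Rsh (- g j) \<circ> OpA Y v A \<circ> Rsh (g j)) u t + proj {s. s + - g j \<in> Gamma' Y v} u t" for j t
        unfolding opl[of "g j" "OpA Y v A" "proj (Gamma' Y v)" u t] proj_conj ..
      have eqp: "(\<lambda>t. X j u t - S u t) = (\<lambda>t. a j t - b j t - c j t)" for j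
        unfolding a_def b_def c_def S_def by (rule ext, simp only: opl2, simp add: algebra_simps)
      have bL: "b j \<in> L2" for j unfolding b_def by (rule conjunct1[OF l2_diff]) (use l2_proj[OF u] in auto)
      have cb: "c j \<in> L2 \<and> l2norm (c j) \<le> M * l2norm (proj (G j) u)" for j
        unfolding c_def X_def G_def using S.conj_decomp_bound[OF _ gj u] kj by simp
      have le: "l2norm (\<lambda>t. X j u t - S u t) \<le> l2norm (a j) + l2norm (b j) + M * l2norm (proj (G j) u)" for j
      proof -
        have "l2norm (\<lambda>t. X j u t - S u t) \<le> l2norm (a j) + l2norm (b j) + l2norm (c j)"
          unfolding eqp by (rule l2_garbage3[OF bL conjunct1[OF cb]])
        then show ?thesis using cb[of j] by simp
      qed
      have aconv: "(\<lambda>j. l2norm (a j)) \<longlonglongrightarrow> 0"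
      proof -
        have "(\<lambda>m. l2norm (\<lambda>t. (Rsh (- h m) \<circ> op_plus (OpA Y v A) (proj (Gamma' Y v)) \<circ> Rsh (h m)) u t - Bh u t)) \<longlonglongrightarrow> 0"
          using h_lim u unfolding limop_def strong_lim_def by blast
        from LIMSEQ_subseq_LIMSEQ[OF this nr] show ?thesis by (simp add: a_def g_def o_def)
      qed
      have bconv: "(\<lambda>j. l2norm (b j)) \<longlonglongrightarrow> 0" unfolding b_def by (rule Pconv[OF u])
      have sumconv: "(\<lambda>j. l2norm (a j) + l2norm (b j) + M * l2norm (proj (G j) u)) \<longlonglongrightarrow> 0 + 0 + M * 0"
        by (intro tendsto_add tendsto_mult_left aconv bconv Gconv[OF u])
      show "(\<lambda>j. l2norm (\<lambda>t. (Rsh (- w) \<circ> Rsh (- \<eta> (r j)) \<circ> A (kj (r j)) \<circ> proj (Y (kj (r j)))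
                            \<circ> Rsh (\<eta> (r j)) \<circ> Rsh w) u t - S u t)) \<longlonglongrightarrow> 0"
      proof (rule tendsto_sandwich[where f="\<lambda>j. 0" and h="\<lambda>j. l2norm (a j) + l2norm (b j) + M * l2norm (proj (G j) u)"])
        show "\<forall>\<^sub>F j in sequentially. 0 \<le> l2norm (\<lambda>t. (Rsh (- w) \<circ> Rsh (- \<eta> (r j)) \<circ> A (kj (r j)) \<circ> proj (Y (kj (r j)))
                            \<circ> Rsh (\<eta> (r j)) \<circ> Rsh w) u t - S u t)"
          by (simp add: l2norm_nonneg)
        show "\<forall>\<^sub>F j in sequentially. l2norm (\<lambda>t. (Rsh (- w) \<circ> Rsh (- \<eta> (r j)) \<circ> A (kj (r j)) \<circ> proj (Y (kj (r j)))
                            \<circ> Rsh (\<eta> (r j)) \<circ> Rsh w) u t - S u t) \<le> l2norm (a j) + l2norm (b j) + M * l2norm (proj (G j) u)"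
          using le unfolding X_def by simp
        show "(\<lambda>j. 0) \<longlonglongrightarrow> (0::real)" by simp
        show "(\<lambda>j. l2norm (a j) + l2norm (b j) + M * l2norm (proj (G j) u)) \<longlonglongrightarrow> 0"
          using sumconv by simp
      qed
    qed
  qed
qed


end
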